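(* For $f\in\mathcal A$ the following are equivalent: (1) $f\in\mathcal J$; (2) $f$ has zero sums at every $v\in\mathrm{Cu}_2\setminus\{\lozenge\}$ without symmetric core; (3) there are no $g,h\in\mathcal A$ with $g\#f\#h=\delta_e$. In particular $\mathcal J=\{f\in\mathcal A:\text{there are no }g,h\in\mathcal A\text{ with }g\#f\#h=\delta_e\}$, and $\mathcal J$ is the unique maximal two-sided ideal of $\mathcal A$.
   Context: Let $\mathrm{Cu}_2$ be the involutive monoid with identity $e$ and zero element $\lozenge$ (so $\lozenge t=\lozenge=t\lozenge$ for all $t$), generated by $s_1,s_2,s_1^*,s_2^*$ subject to $s_1^*s_1=e=s_2^*s_2$ and $s_1^*s_2=\lozenge=s_2^*s_1$, with involution $t\mapsto t^*$ satisfying $(t^* )^*=t$, $(tu)^*=u^*t^*$. Let $\mathbf I_0=\{\emptyset\}$, $\mathbf I_n=\{1,2\}^n$, $\mathbf I=\bigcup_{n\ge0}\mathbf I_n$ (finite words; concatenation written $\mathbf{ij}$), and $\mathbf L=\{1,2\}^{\mathbb N}$; for $\mathbf n=(n_1,n_2,\dots)\in\mathbf L$ put $\mathbf n_0=\emptyset$, $\mathbf n_l=(n_1,\dots,n_l)$. For $\mathbf i=(i_1,\dots,i_k)\in\mathbf I$ put $s_{\mathbf i}=s_{i_1}\cdots s_{i_k}$ ($s_\emptyset=e$) and $s_{\mathbf i}^*=(s_{\mathbf i})^*$. Every $t\in\mathrm{Cu}_2\setminus\{\lozenge\}$ can be written uniquely as $t=s_{\mathbf i}s_{\mathbf j}^*$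 with $\mathbf i,\mathbf j\in\mathbf I$. Let $\mathcal A=\ell^1(\mathrm{Cu}_2\setminus\{\lozenge\})$ with product $\#$ determined by bilinearity and continuity from $\delta_s\#\delta_t=\delta_{st}$ if $st\neq\lozenge$ and $\delta_s\#\delta_t=0$ if $st=\lozenge$; this is a unital Banach $*$-algebra with unit $\delta_e$. Let $f_0=\delta_e-\delta_{s_1s_1^*}-\delta_{s_2s_2^*}$ and let $\mathcal J$ be the closed two-sided ideal of $\mathcal A$ generated by $f_0$. An element $f\in\mathcal A$ has zero sums at $v=s_{\mathbf i}s_{\mathbf j}^*$ if $\sum_{l=0}^\infty f(s_{\mathbf i\mathbf n_l}s_{\mathbf j\mathbf n_l}^* )=0$ for every $\mathbf n\in\mathbf L$. An element $t\in\mathrm{Cu}_2\setminus\{\lozenge\}$ is without symmetric core if whenever $t=s_{\mathbf{mk}}s_{\mathbf{nk}}^*$ with $\mathbf m,\mathbf n,\mathbf k\in\mathbf I$ then $\mathbf k=\emptyset$. *)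

theory Defs
  imports "HOL-Analysis.Analysis"
begin

datatype gen = G1 | G2

type_synonym word = "gen list"

text \<open>A nonzero element s_i s_j^* of Cu_2 is encoded as the pair (i, j) of words
  (unique normal form).  The identity e is ([], []).\<close>
type_synonym cu = "word \<times> word"

text \<open>Product in Cu_2; None stands for the zero element.
  s_i s_j^* s_k s_l^* : s_j^* s_k = s_k' if k = j k', = s_j'^* if j = k j', zero otherwise.\<close>
definition cu_mult :: "cu \<Rightarrow> cu \<Rightarrow> cu option" where
  "cu_mult a b = (case a of (i, j) \<Rightarrow> case b of (k, l) \<Rightarrow>
     (if (\<exists>k'. k = j @ k') then Some (i @ drop (length j) k, l)
      else if (\<exists>j'. j = k @ j') then Some (i, l @ drop (length k) j)
      else None))"

definition Acal :: "(cu \<Rightarrow> complex) set" where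
  "Acal = {f. (\<lambda>t. norm (f t)) summable_on UNIV}"

definition l1norm :: "(cu \<Rightarrow> complex) \<Rightarrow> real" where
  "l1norm f = (\<Sum>\<^sub>\<infinity>t. norm (f t))"

text \<open>The product #, the continuous bilinear extension of delta_s # delta_t = delta_{st}
  (or 0 if st is the zero element).\<close>
definition conv :: "(cu \<Rightarrow> complex) \<Rightarrow> (cu \<Rightarrow> complex) \<Rightarrow> (cu \<Rightarrow> complex)" where
  "conv f g = (\<lambda>t. \<Sum>\<^sub>\<infinity>p. (if cu_mult (fst p) (snd p) = Some t then f (fst p) * g (snd p) else 0))"

definition delta :: "cu \<Rightarrow> (cu \<Rightarrow> complex)" where
  "delta s = (\<lambda>t. if t = s then 1 else 0)"

definition delta_e :: "cu \<Rightarrow> complex" where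
  "delta_e = delta ([], [])"

definition f0 :: "cu \<Rightarrow> complex" where
  "f0 = (\<lambda>t. delta ([], []) t - delta ([G1], [G1]) t - delta ([G2], [G2]) t)"

definition two_sided_ideal :: "(cu \<Rightarrow> complex) set \<Rightarrow> bool" where
  "two_sided_ideal I \<longleftrightarrow> I \<subseteq> Acal \<and> (\<lambda>_. 0) \<in> I
     \<and> (\<forall>f\<in>I. \<forall>g\<in>I. (\<lambda>t. f t + g t) \<in> I)
     \<and> (\<forall>c::complex. \<forall>f\<in>I. (\<lambda>t. c * f t) \<in> I)
     \<and> (\<forall>g\<in>Acal. \<forall>f\<in>I. conv g f \<in> I \<and> conv f g \<in> I)"

definition l1_closed :: "(cu \<Rightarrow> complex) set \<Rightarrow> bool" where
  "l1_closed S \<longleftrightarrow> (\<forall>u f. (\<forall>n. u n \<in> S) \<and> f \<in> Acal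
       \<and> (\<lambda>n. l1norm (\<lambda>t. u n t - f t)) \<longlonglongrightarrow> 0 \<longrightarrow> f \<in> S)"

definition Jcal :: "(cu \<Rightarrow> complex) set" where
  "Jcal = \<Inter> {I. two_sided_ideal I \<and> l1_closed I \<and> f0 \<in> I}"

definition zero_sums_at :: "(cu \<Rightarrow> complex) \<Rightarrow> cu \<Rightarrow> bool" where
  "zero_sums_at f v \<longleftrightarrow> (\<forall>n :: nat \<Rightarrow> gen.
     (\<lambda>l. f (fst v @ map n [0..<l], snd v @ map n [0..<l])) sums 0)"

definition without_symmetric_core :: "cu \<Rightarrow> bool" where
  "without_symmetric_core t \<longleftrightarrow> (\<forall>m n k. t = (m @ k, n @ k) \<longrightarrow> k = [])"

end

theory Submission
  imports Defs
begin

abbreviation asum :: "('a \<Rightarrow> complex) \<Rightarrow> 'a set \<Rightarrow> bool" where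
  "asum F A \<equiv> (\<lambda>x. norm (F x)) summable_on A"

definition push :: "('a \<Rightarrow> 'b option) \<Rightarrow> ('a \<Rightarrow> complex) \<Rightarrow> 'b \<Rightarrow> complex" where
  "push h F t = infsum F {x. h x = Some t}"

lemma abs_sub: "asum (F::'a\<Rightarrow>complex) UNIV \<Longrightarrow> asum F A"
  using summable_on_subset_banach by blast

lemma abs_sum_sub: "asum (F::'a\<Rightarrow>complex) UNIV \<Longrightarrow> F summable_on A"
  using abs_sub abs_summable_summable by blast

lemma fiber:
  fixes F :: "'a \<Rightarrow> complex" and h :: "'a \<Rightarrow> 'b option"
  assumes F: "asum F UNIV"
  shows "asum (push h F) S"
    "infsum (push h F) S = infsum F {x. h x \<in> Some ` S}"
    "infsum (\<lambda>t. norm (push h F t)) S \<le> infsum (\<lambda>x. norm (F x)) {x. h x \<in> Some ` S}"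
proof -
  let ?Sig = "Sigma S (\<lambda>t. {x. h x = Some t})"
  have inj: "inj_on snd ?Sig" by (auto simp: inj_on_def)
  have img: "snd ` ?Sig = {x. h x \<in> Some ` S}" by force
  have sF: "F summable_on {x. h x \<in> Some ` S}" using abs_sum_sub[OF F] .
  have snF: "(\<lambda>x. norm (F x)) summable_on {x. h x \<in> Some ` S}" using abs_sub[OF F] .
  have s1: "(\<lambda>(t,x). F x) summable_on ?Sig"
  proof -
    have "(F \<circ> snd) summable_on ?Sig" using summable_on_reindex[OF inj, of F] sF img by simp
    then show ?thesis by (simp add: o_def case_prod_unfold)
  qed
  have s2: "(\<lambda>(t,x). norm (F x)) summable_on ?Sig"
  proof -
    have "((\<lambda>x. norm (F x)) \<circ> snd) summable_on ?Sig"
      using summable_on_reindex[OF inj, of "\<lambda>x. norm (F x)"] snF img by simp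
    then show ?thesis by (simp add: o_def case_prod_unfold)
  qed
  have e1: "infsum (\<lambda>t. infsum (\<lambda>x. F x) {x. h x = Some t}) S = infsum (\<lambda>(t,x). F x) ?Sig"
    using infsum_Sigma'_banach[OF s1] by simp
  have e1': "infsum (\<lambda>(t,x). F x) ?Sig = infsum F {x. h x \<in> Some ` S}"
  proof -
    have "infsum F (snd ` ?Sig) = infsum (F \<circ> snd) ?Sig" by (rule infsum_reindex[OF inj])
    then show ?thesis using img by (simp add: o_def case_prod_unfold)
  qed
  have e2: "infsum (\<lambda>t. infsum (\<lambda>x. norm (F x)) {x. h x = Some t}) S = infsum (\<lambda>(t,x). norm (F x)) ?Sig"
    using infsum_Sigma'_banach[OF s2] by simp
  have e2': "infsum (\<lambda>(t,x). norm (F x)) ?Sig = infsum (\<lambda>x. norm (F x)) {x. h x \<in> Some ` S}"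
  proof -
    have "infsum (\<lambda>x. norm (F x)) (snd ` ?Sig) = infsum ((\<lambda>x. norm (F x)) \<circ> snd) ?Sig" by (rule infsum_reindex[OF inj])
    then show ?thesis using img by (simp add: o_def case_prod_unfold)
  qed
  have sm2: "(\<lambda>t. infsum (\<lambda>x. norm (F x)) {x. h x = Some t}) summable_on S"
    using summable_on_Sigma_banach[OF s2] by simp
  have bnd: "norm (push h F t) \<le> infsum (\<lambda>x. norm (F x)) {x. h x = Some t}" for t
    unfolding push_def by (rule norm_infsum_bound[OF abs_sub[OF F]])
  show ps: "asum (push h F) S"
    by (rule Infinite_Sum.abs_summable_on_comparison_test'[OF sm2 bnd])
  show "infsum (push h F) S = infsum F {x. h x \<in> Some ` S}"
    using e1 e1' unfolding push_def by simp
  have "infsum (\<lambda>t. norm (push h F t)) S \<le> infsum (\<lambda>t. infsum (\<lambda>x. norm (F x)) {x. h x = Some t}) S"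
    by (rule infsum_mono[OF ps sm2 bnd])
  then show "infsum (\<lambda>t. norm (push h F t)) S \<le> infsum (\<lambda>x. norm (F x)) {x. h x \<in> Some ` S}"
    using e2 e2' by simp
qed

lemma Acal_iff: "F \<in> Acal \<longleftrightarrow> asum F UNIV" by (simp add: Acal_def)

lemma push_Acal: "asum F UNIV \<Longrightarrow> push h F \<in> Acal"
  using fiber(1)[of F h UNIV] by (simp add: Acal_def)

lemma push_norm: "asum F UNIV \<Longrightarrow> l1norm (push h F) \<le> infsum (\<lambda>x. norm (F x)) UNIV"
proof -
  assume F: "asum F UNIV"
  have "infsum (\<lambda>x. norm (F x)) {x. h x \<in> Some ` UNIV} \<le> infsum (\<lambda>x. norm (F x)) UNIV"
    by (rule infsum_mono_neutral) (use F abs_sub[OF F] in auto)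
  then show ?thesis using fiber(3)[OF F, of h UNIV] by (simp add: l1norm_def)
qed

definition cm :: "cu \<times> cu \<Rightarrow> cu option" where "cm p = cu_mult (fst p) (snd p)"

definition tens :: "('a \<Rightarrow> complex) \<Rightarrow> ('b \<Rightarrow> complex) \<Rightarrow> 'a \<times> 'b \<Rightarrow> complex" where
  "tens f g p = f (fst p) * g (snd p)"

lemma conv_push: "conv f g = push cm (tens f g)"
proof
  fix t
  show "conv f g t = push cm (tens f g) t"
    unfolding conv_def push_def
    by (rule infsum_cong_neutral) (auto simp: cm_def tens_def)
qed

lemma tens_abs:
  assumes f: "asum f UNIV" and g: "asum g UNIV"
  shows "asum (tens f g) UNIV"
    "infsum (\<lambda>p. norm (tens f g p)) UNIV = infsum (\<lambda>x. norm (f x)) UNIV * infsum (\<lambda>x. norm (g x)) UNIV"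
proof -
  have U: "(UNIV :: ('a\<times>'b) set) = Sigma UNIV (\<lambda>_. UNIV)" by simp
  have a1: "\<forall>x\<in>UNIV. asum (\<lambda>y. tens f g (x, y)) UNIV"
    using summable_on_cmult_right[OF g] by (simp add: tens_def norm_mult)
  have i1: "infsum (\<lambda>y. norm (tens f g (x, y))) UNIV = norm (f x) * infsum (\<lambda>y. norm (g y)) UNIV" for x
    by (simp add: tens_def norm_mult infsum_cmult_right')
  have a2: "asum (\<lambda>x. infsum (\<lambda>y. norm (tens f g (x, y))) UNIV) UNIV"
    unfolding i1 using summable_on_cmult_left[OF f] by (simp add: norm_mult)
  show A: "asum (tens f g) UNIV"
    using Infinite_Sum.abs_summable_on_Sigma_iff[of "tens f g" UNIV "\<lambda>_. UNIV"] a1 a2 by simp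
  have "infsum (\<lambda>p. norm (tens f g p)) UNIV = infsum (\<lambda>x. infsum (\<lambda>y. norm (tens f g (x, y))) UNIV) UNIV"
    using infsum_Sigma_banach[of "\<lambda>p. norm (tens f g p)" UNIV "\<lambda>_. UNIV"] A by simp
  also have "\<dots> = infsum (\<lambda>x. norm (f x) * infsum (\<lambda>y. norm (g y)) UNIV) UNIV" unfolding i1 ..
  also have "\<dots> = infsum (\<lambda>x. norm (f x)) UNIV * infsum (\<lambda>x. norm (g x)) UNIV"
    by (simp add: infsum_cmult_left')
  finally show "infsum (\<lambda>p. norm (tens f g p)) UNIV = infsum (\<lambda>x. norm (f x)) UNIV * infsum (\<lambda>x. norm (g x)) UNIV" .
qed

lemma conv_Acal: "f \<in> Acal \<Longrightarrow> g \<in> Acal \<Longrightarrow> conv f g \<in> Acal"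
  unfolding conv_push by (rule push_Acal, rule tens_abs(1)) (auto simp: Acal_def)

lemma conv_norm: "f \<in> Acal \<Longrightarrow> g \<in> Acal \<Longrightarrow> l1norm (conv f g) \<le> l1norm f * l1norm g"
  unfolding conv_push l1norm_def
  using push_norm[of "tens f g" cm] tens_abs[of f g] by (simp add: Acal_def l1norm_def)

definition act :: "cu \<Rightarrow> word \<Rightarrow> word option" where
  "act a w = (if \<exists>w'. w = snd a @ w' then Some (fst a @ drop (length (snd a)) w) else None)"

definition acto :: "cu option \<Rightarrow> word \<Rightarrow> word option" where
  "acto x = (case x of None \<Rightarrow> Map.empty | Some a \<Rightarrow> act a)"

lemma acto_Some[simp]: "acto (Some a) = act a" by (simp add: acto_def)
lemma acto_None[simp]: "acto None = Map.empty" by (simp add: acto_def)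

lemma prefix_cases: "(\<exists>w'. x @ y = j @ w') \<Longrightarrow> (\<exists>k'. x = j @ k') \<or> (\<exists>j'. j = x @ j')"
  by (metis append_eq_append_conv2)

lemma cu_mult_act: "acto (cu_mult a b) = act a \<circ>\<^sub>m act b"
proof (rule ext)
  fix w
  obtain i j k l where ab: "a = (i,j)" "b = (k,l)" by (cases a, cases b)
  show "acto (cu_mult a b) w = (act a \<circ>\<^sub>m act b) w"
  proof (cases "\<exists>k'. k = j @ k'")
    case True
    then obtain k' where k': "k = j @ k'" by blast
    show ?thesis using k' ab by (auto simp: cu_mult_def acto_def act_def map_comp_def)
  next
    case F1: False
    show ?thesis
    proof (cases "\<exists>j'. j = k @ j'")
      case True
      then obtain j' where j': "j = k @ j'" by blast
      show ?thesis using j' ab F1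
        by (auto simp: cu_mult_def acto_def act_def map_comp_def split: option.splits)
    next
      case False
      have "(act a \<circ>\<^sub>m act b) w = None"
        using F1 False ab apply (auto simp: act_def map_comp_def split: option.splits)
        by (metis append_eq_append_conv2)
      then show ?thesis using F1 False ab by (auto simp: cu_mult_def acto_def)
    qed
  qed
qed

lemma act_nonempty: "act a (snd a) = Some (fst a)"
  by (simp add: act_def)

lemma gen_other: "\<exists>g'::gen. g' \<noteq> g" by (cases g) auto

lemma act_inj: assumes "act a = act b" shows "a = b"
proof -
  obtain i j k l where ab: "a = (i,j)" "b = (k,l)" by (cases a, cases b)
  have 1: "act b j = Some i" using assms act_nonempty[of a] ab by simp
  have 2: "act a l = Some k" using assms act_nonempty[of b] ab by simp
  from 1 obtain l' where l': "j = l @ l'" using ab by (auto simp: act_def split: if_splits)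
  from 2 obtain j' where j': "l = j @ j'" using ab by (auto simp: act_def split: if_splits)
  have "j = l" using l' j' by simp
  then show ?thesis using 1 ab by (simp add: act_def)
qed

lemma acto_inj: "acto x = acto y \<Longrightarrow> x = y"
proof (cases x; cases y)
  fix a b assume "acto x = acto y" "x = Some a" "y = Some b" then show ?thesis
    using act_inj by (simp add: acto_def)
next
  fix a assume "acto x = acto y" "x = None" "y = Some a" then show ?thesis
    using act_nonempty[of a] by (auto dest!: fun_cong[where x="snd a"])
next
  fix a assume "acto x = acto y" "x = Some a" "y = None" then show ?thesis
    using act_nonempty[of a] by (auto dest!: fun_cong[where x="snd a"])
qed simp

lemma acto_bind: "acto (Option.bind x (\<lambda>s. cu_mult s c)) = acto x \<circ>\<^sub>m act c"
  by (cases x) (simp_all add: cu_mult_act)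

lemma acto_bind2: "acto (Option.bind x (\<lambda>s. cu_mult a s)) = act a \<circ>\<^sub>m acto x"
  by (cases x) (simp_all add: cu_mult_act map_comp_def)

lemma cu_assoc: "Option.bind (cu_mult a b) (\<lambda>s. cu_mult s c) = Option.bind (cu_mult b c) (\<lambda>s. cu_mult a s)"
  apply (rule acto_inj)
  apply (simp add: acto_bind acto_bind2 cu_mult_act)
  by (simp add: map_comp_def fun_eq_iff split: option.splits)

lemma cu_mult_e1[simp]: "cu_mult ([],[]) q = Some q" by (cases q) (simp add: cu_mult_def)
lemma cu_mult_e2[simp]: "cu_mult q ([],[]) = Some q" by (cases q) (simp add: cu_mult_def)

lemma infsum_delta: "infsum (delta q) A = (if q \<in> A then 1 else 0)"
proof -
  have "infsum (delta q) A = infsum (delta q) (A \<inter> {q})"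
    by (rule infsum_cong_neutral) (auto simp: delta_def)
  then show ?thesis by (cases "q \<in> A") (auto simp: delta_def)
qed

lemma delta_Acal: "delta q \<in> Acal"
proof -
  have "(\<lambda>x. norm (delta q x)) summable_on {q}" by simp
  moreover have "asum (delta q) UNIV \<longleftrightarrow> asum (delta q) {q}"
    by (rule summable_on_cong_neutral) (auto simp: delta_def)
  ultimately show ?thesis unfolding Acal_def by simp
qed

lemma conv_delta_left: "conv (delta p) F = push (cu_mult p) F"
proof
  fix t
  have "push cm (tens (delta p) F) t = infsum (\<lambda>x. F (snd x)) (Pair p ` {q. cu_mult p q = Some t})"
    unfolding push_def by (rule infsum_cong_neutral) (auto simp: cm_def tens_def delta_def)
  also have "\<dots> = infsum F {q. cu_mult p q = Some t}"
    by (subst infsum_reindex) (auto simp: inj_on_def o_def)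
  finally show "conv (delta p) F t = push (cu_mult p) F t" by (simp add: conv_push push_def)
qed

lemma conv_delta_right: "conv F (delta p) = push (\<lambda>q. cu_mult q p) F"
proof
  fix t
  have "push cm (tens F (delta p)) t = infsum (\<lambda>x. F (fst x)) ((\<lambda>q. (q,p)) ` {q. cu_mult q p = Some t})"
    unfolding push_def by (rule infsum_cong_neutral) (auto simp: cm_def tens_def delta_def)
  also have "\<dots> = infsum F {q. cu_mult q p = Some t}"
    by (subst infsum_reindex) (auto simp: inj_on_def o_def)
  finally show "conv F (delta p) t = push (\<lambda>q. cu_mult q p) F t" by (simp add: conv_push push_def)
qed

lemma push_delta: "push h (delta q) = (case h q of None \<Rightarrow> (\<lambda>_. 0) | Some r \<Rightarrow> delta r)"
  unfolding push_def infsum_delta by (rule ext, cases "h q") (auto simp: delta_def)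

lemma conv_delta_delta: "conv (delta p) (delta q) = (case cu_mult p q of None \<Rightarrow> (\<lambda>_. 0) | Some r \<Rightarrow> delta r)"
  by (simp add: conv_delta_left push_delta)

lemma push_add: "asum F UNIV \<Longrightarrow> asum G UNIV \<Longrightarrow> push h (\<lambda>x. F x + G x) = (\<lambda>t. push h F t + push h G t)"
  unfolding push_def by (auto intro!: infsum_add abs_sum_sub)

lemma push_scale: "push h (\<lambda>x. c * F x) = (\<lambda>t. c * push h F t)"
  unfolding push_def by (simp add: infsum_cmult_right')

lemma push_comp: assumes F: "asum F UNIV"
  shows "push k (push h F) = push (\<lambda>x. Option.bind (h x) k) F"
proof
  fix t
  have "push k (push h F) t = infsum (push h F) {s. k s = Some t}"
    by (rule push_def)
  also have "\<dots> = infsum F {x. h x \<in> Some ` {s. k s = Some t}}"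
    by (rule fiber(2)[OF F])
  also have "{x. h x \<in> Some ` {s. k s = Some t}} = {x. Option.bind (h x) k = Some t}"
    by (auto simp: bind_eq_Some_conv)
  also have "infsum F {x. Option.bind (h x) k = Some t} = push (\<lambda>x. Option.bind (h x) k) F t"
    by (simp only: push_def)
  finally show "push k (push h F) t = push (\<lambda>x. Option.bind (h x) k) F t" .
qed

lemma push_bij: assumes "bij \<sigma>" shows "push k F = push (k \<circ> \<sigma>) (F \<circ> \<sigma>)"
proof
  fix t
  have b: "bij_betw \<sigma> {x. k (\<sigma> x) = Some t} {y. k y = Some t}"
    using assms by (auto simp: bij_betw_def bij_def inj_on_def image_iff)
  show "push k F t = push (k \<circ> \<sigma>) (F \<circ> \<sigma>) t"
    unfolding push_def using infsum_reindex_bij_betw[OF b, of F] by (simp add: o_def)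
qed

lemma tens_push1:
  fixes h :: "'a \<Rightarrow> 'b option" and T :: "'a \<Rightarrow> complex" and G :: "'c \<Rightarrow> complex"
  shows "tens (push h T) G = push (\<lambda>(x,y). map_option (\<lambda>s. (s,y)) (h x)) (tens T G)"
proof (rule ext)
  fix p :: "'b \<times> 'c"
  obtain s c where p: "p = (s,c)" by (cases p)
  have "tens (push h T) G p = infsum (\<lambda>x. T x * G c) {x. h x = Some s}"
    by (simp add: p tens_def push_def infsum_cmult_left')
  also have "\<dots> = infsum (tens T G) ((\<lambda>x. (x,c)) ` {x. h x = Some s})"
    by (subst infsum_reindex) (auto simp: inj_on_def o_def tens_def)
  also have "(\<lambda>x. (x,c)) ` {x. h x = Some s} = {y. (\<lambda>(x,y). map_option (\<lambda>s. (s,y)) (h x)) y = Some p}"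
    by (auto simp: p)
  also have "infsum (tens T G) {y. (\<lambda>(x,y). map_option (\<lambda>s. (s,y)) (h x)) y = Some p} = push (\<lambda>(x,y). map_option (\<lambda>s. (s,y)) (h x)) (tens T G) p"
    by (simp only: push_def)
  finally show "tens (push h T) G p = push (\<lambda>(x,y). map_option (\<lambda>s. (s,y)) (h x)) (tens T G) p" .
qed

lemma tens_push2:
  fixes h :: "'a \<Rightarrow> 'b option" and T :: "'a \<Rightarrow> complex" and F :: "'c \<Rightarrow> complex"
  shows "tens F (push h T) = push (\<lambda>(x,y). map_option (\<lambda>s. (x,s)) (h y)) (tens F T)"
proof (rule ext)
  fix p :: "'c \<times> 'b"
  obtain c s where p: "p = (c,s)" by (cases p)
  have "tens F (push h T) p = infsum (\<lambda>x. F c * T x) {x. h x = Some s}"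
    by (simp add: p tens_def push_def infsum_cmult_right')
  also have "\<dots> = infsum (tens F T) ((\<lambda>x. (c,x)) ` {x. h x = Some s})"
    by (subst infsum_reindex) (auto simp: inj_on_def o_def tens_def)
  also have "(\<lambda>x. (c,x)) ` {x. h x = Some s} = {y. (\<lambda>(x,y). map_option (\<lambda>s. (x,s)) (h y)) y = Some p}"
    by (auto simp: p)
  also have "infsum (tens F T) {y. (\<lambda>(x,y). map_option (\<lambda>s. (x,s)) (h y)) y = Some p} = push (\<lambda>(x,y). map_option (\<lambda>s. (x,s)) (h y)) (tens F T) p"
    by (simp only: push_def)
  finally show "tens F (push h T) p = push (\<lambda>(x,y). map_option (\<lambda>s. (x,s)) (h y)) (tens F T) p" .
qed

lemma conv_assoc:
  assumes f: "f \<in> Acal" and g: "g \<in> Acal" and h: "h \<in> Acal"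
  shows "conv (conv f g) h = conv f (conv g h)"
proof -
  have fg: "asum (tens f g) UNIV" using tens_abs(1) f g by (simp add: Acal_def)
  have gh: "asum (tens g h) UNIV" using tens_abs(1) g h by (simp add: Acal_def)
  have fgh: "asum (tens f (tens g h)) UNIV" using tens_abs(1) f gh by (simp add: Acal_def)
  have fgh': "asum (tens (tens f g) h) UNIV" using tens_abs(1) fg h by (simp add: Acal_def)
  define \<sigma> :: "(cu \<times> cu) \<times> cu \<Rightarrow> cu \<times> cu \<times> cu" where "\<sigma> = (\<lambda>((a,b),c). (a,(b,c)))"
  have bij: "bij \<sigma>" unfolding \<sigma>_def
    by (rule bij_betwI[where g = "\<lambda>(a,(b,c)). ((a,b),c)"]) auto
  have T: "tens (tens f g) h = tens f (tens g h) \<circ> \<sigma>"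
    by (auto simp: fun_eq_iff \<sigma>_def tens_def)
  have L: "conv (conv f g) h = push (\<lambda>x. Option.bind ((\<lambda>(x,y). map_option (\<lambda>s. (s,y)) (cm x)) x) cm) (tens (tens f g) h)"
    by (simp add: conv_push tens_push1 push_comp[OF fgh'])
  have R: "conv f (conv g h) = push (\<lambda>x. Option.bind ((\<lambda>(x,y). map_option (\<lambda>s. (x,s)) (cm y)) x) cm) (tens f (tens g h))"
    by (simp add: conv_push tens_push2 push_comp[OF fgh])
  have K: "(\<lambda>x. Option.bind ((\<lambda>(x,y). map_option (\<lambda>s. (x,s)) (cm y)) x) cm) \<circ> \<sigma>
       = (\<lambda>x. Option.bind ((\<lambda>(x,y). map_option (\<lambda>s. (s,y)) (cm x)) x) cm)"
  proof
    fix x :: "(cu \<times> cu) \<times> cu"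
    obtain a b c where x: "x = ((a,b),c)" by (metis prod.collapse)
    show "((\<lambda>x. Option.bind ((\<lambda>(x,y). map_option (\<lambda>s. (x,s)) (cm y)) x) cm) \<circ> \<sigma>) x
       = (\<lambda>x. Option.bind ((\<lambda>(x,y). map_option (\<lambda>s. (s,y)) (cm x)) x) cm) x"
      using cu_assoc[of a b c] by (simp add: x \<sigma>_def cm_def bind_map_option o_def)
  qed
  show ?thesis using L R push_bij[OF bij, of "(\<lambda>x. Option.bind ((\<lambda>(x,y). map_option (\<lambda>s. (x,s)) (cm y)) x) cm)" "tens f (tens g h)"] K T by simp
qed

lemma conv_e_left: "conv delta_e F = F"
  by (simp add: delta_e_def conv_delta_left push_def fun_eq_iff)

lemma conv_e_right: "conv F delta_e = F"
  by (simp add: delta_e_def conv_delta_right push_def fun_eq_iff)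

lemma tens_add1: "tens (\<lambda>x. f x + g x) h = (\<lambda>p. tens f h p + tens g h p)"
  by (simp add: tens_def fun_eq_iff algebra_simps)
lemma tens_add2: "tens h (\<lambda>x. f x + g x) = (\<lambda>p. tens h f p + tens h g p)"
  by (simp add: tens_def fun_eq_iff algebra_simps)
lemma tens_scale1: "tens (\<lambda>x. c * f x) h = (\<lambda>p. c * tens f h p)"
  by (simp add: tens_def fun_eq_iff algebra_simps)
lemma tens_scale2: "tens h (\<lambda>x. c * f x) = (\<lambda>p. c * tens h f p)"
  by (simp add: tens_def fun_eq_iff algebra_simps)

lemma conv_add1: "f \<in> Acal \<Longrightarrow> g \<in> Acal \<Longrightarrow> h \<in> Acal \<Longrightarrow> conv (\<lambda>x. f x + g x) h = (\<lambda>t. conv f h t + conv g h t)"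
  unfolding conv_push tens_add1 by (rule push_add) (auto intro: tens_abs simp: Acal_def)
lemma conv_add2: "f \<in> Acal \<Longrightarrow> g \<in> Acal \<Longrightarrow> h \<in> Acal \<Longrightarrow> conv h (\<lambda>x. f x + g x) = (\<lambda>t. conv h f t + conv h g t)"
  unfolding conv_push tens_add2 by (rule push_add) (auto intro: tens_abs simp: Acal_def)
lemma conv_scale1: "conv (\<lambda>x. c * f x) h = (\<lambda>t. c * conv f h t)"
  unfolding conv_push tens_scale1 by (rule push_scale)
lemma conv_scale2: "conv h (\<lambda>x. c * f x) = (\<lambda>t. c * conv h f t)"
  unfolding conv_push tens_scale2 by (rule push_scale)

lemma Acal_add: "f \<in> Acal \<Longrightarrow> g \<in> Acal \<Longrightarrow> (\<lambda>x. f x + g x) \<in> Acal"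
proof -
  assume f: "f \<in> Acal" and g: "g \<in> Acal"
  have "(\<lambda>x. norm (f x) + norm (g x)) summable_on UNIV"
    using f g by (auto simp: Acal_def intro: summable_on_add)
  then show ?thesis unfolding Acal_def mem_Collect_eq
    by (rule Infinite_Sum.abs_summable_on_comparison_test') (simp add: norm_triangle_ineq)
qed

lemma Acal_scale: "f \<in> Acal \<Longrightarrow> (\<lambda>x. c * f x) \<in> Acal"
  unfolding Acal_def by (simp add: norm_mult summable_on_cmult_right)

lemma Acal_0: "(\<lambda>_. 0) \<in> Acal" by (simp add: Acal_def)

definition nl :: "(nat \<Rightarrow> gen) \<Rightarrow> nat \<Rightarrow> word" where "nl n l = map n [0..<l]"

definition branch :: "cu \<Rightarrow> (nat \<Rightarrow> gen) \<Rightarrow> nat \<Rightarrow> cu" where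
  "branch v n l = (fst v @ nl n l, snd v @ nl n l)"

definition Br :: "cu \<Rightarrow> (nat \<Rightarrow> gen) \<Rightarrow> cu set" where "Br v n = range (branch v n)"

definition shft :: "(nat \<Rightarrow> gen) \<Rightarrow> nat \<Rightarrow> gen" where "shft n k = n (Suc k)"
definition gcons :: "gen \<Rightarrow> (nat \<Rightarrow> gen) \<Rightarrow> nat \<Rightarrow> gen" where
  "gcons g n k = (case k of 0 \<Rightarrow> g | Suc k' \<Rightarrow> n k')"

lemma nl_0[simp]: "nl n 0 = []" by (simp add: nl_def)
lemma nl_Suc: "nl n (Suc l) = n 0 # nl (shft n) l"
  by (simp add: nl_def map_upt_Suc shft_def del: upt_Suc)
lemma nl_gcons[simp]: "nl (gcons g n) (Suc l) = g # nl n l"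
proof -
  have "shft (gcons g n) = n" by (simp add: shft_def gcons_def fun_eq_iff)
  then show ?thesis by (simp add: nl_Suc gcons_def)
qed
lemma length_nl[simp]: "length (nl n l) = l" by (simp add: nl_def)

lemma branch_inj: "inj (branch v n)"
  by (auto simp: inj_on_def branch_def dest: arg_cong[where f=length])

lemma Br_mem: "x \<in> Br v n \<longleftrightarrow> (\<exists>l. x = (fst v @ nl n l, snd v @ nl n l))"
  by (auto simp: Br_def branch_def)

definition wsc :: "cu \<Rightarrow> bool" where
  "wsc v \<longleftrightarrow> fst v = [] \<or> snd v = [] \<or> last (fst v) \<noteq> last (snd v)"

lemma wsc_iff: "without_symmetric_core v \<longleftrightarrow> wsc v"
proof
  assume a: "without_symmetric_core v"
  show "wsc v"
  proof (rule ccontr)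
    assume "\<not> wsc v"
    then have ne: "fst v \<noteq> []" "snd v \<noteq> []" "last (fst v) = last (snd v)" by (auto simp: wsc_def)
    have "v = (butlast (fst v) @ [last (fst v)], butlast (snd v) @ [last (fst v)])"
      using ne by (metis append_butlast_last_id prod.collapse)
    then show False using a by (auto simp: without_symmetric_core_def)
  qed
next
  assume w: "wsc v"
  show "without_symmetric_core v" unfolding without_symmetric_core_def
  proof (intro allI impI)
    fix m n k assume v: "v = (m @ k, n @ k)"
    show "k = []"
    proof (rule ccontr)
      assume "k \<noteq> []"
      then show False using w v by (auto simp: wsc_def)
    qed
  qed
qed

definition ZS :: "(cu \<Rightarrow> complex) \<Rightarrow> bool" where
  "ZS F \<longleftrightarrow> F \<in> Acal \<and> (\<forall>v n. wsc v \<longrightarrow> infsum F (Br v n) = 0)"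

lemma branch_sums: assumes F: "F \<in> Acal"
  shows "(\<lambda>l. F (branch v n l)) sums infsum F (Br v n)"
proof -
  have "F summable_on Br v n" using F abs_sum_sub by (simp add: Acal_def)
  then have "(F has_sum infsum F (Br v n)) (Br v n)" by simp
  then have "((F \<circ> branch v n) has_sum infsum F (Br v n)) UNIV"
    using has_sum_reindex[OF branch_inj] unfolding Br_def by blast
  then show ?thesis by (simp add: has_sum_imp_sums o_def)
qed

lemma zero_sums_iff: assumes F: "F \<in> Acal"
  shows "zero_sums_at F v \<longleftrightarrow> (\<forall>n. infsum F (Br v n) = 0)"
proof -
  have "(\<lambda>l. F (fst v @ map n [0..<l], snd v @ map n [0..<l])) = (\<lambda>l. F (branch v n l))" for n
    by (simp add: branch_def nl_def)
  then show ?thesis unfolding zero_sums_at_def using branch_sums[OF F] sums_unique2 by metis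
qed

lemma ZS_iff: "F \<in> Acal \<Longrightarrow> ZS F \<longleftrightarrow> (\<forall>v. without_symmetric_core v \<longrightarrow> zero_sums_at F v)"
  by (auto simp: ZS_def zero_sums_iff wsc_iff)

definition pre :: "(cu \<Rightarrow> cu option) \<Rightarrow> cu set \<Rightarrow> cu set" where
  "pre h B = {x. h x \<in> Some ` B}"

definition good :: "(cu \<Rightarrow> cu option) \<Rightarrow> bool" where
  "good h \<longleftrightarrow> (\<forall>v n. wsc v \<longrightarrow> pre h (Br v n) = {} \<or> (\<exists>v' n'. wsc v' \<and> pre h (Br v n) = Br v' n'))"

lemma ZS_push: assumes Z: "ZS F" and g: "good h" shows "ZS (push h F)"
proof -
  have F: "asum F UNIV" using Z by (simp add: ZS_def Acal_def)
  have "infsum (push h F) (Br v n) = 0" if "wsc v" for v n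
  proof -
    have "infsum (push h F) (Br v n) = infsum F (pre h (Br v n))"
      using fiber(2)[OF F] by (simp add: pre_def)
    moreover have "pre h (Br v n) = {} \<or> (\<exists>v' n'. wsc v' \<and> pre h (Br v n) = Br v' n')"
      using g that unfolding good_def by blast
    ultimately show ?thesis using Z by (auto simp: ZS_def)
  qed
  then show ?thesis using push_Acal[OF F] by (simp add: ZS_def)
qed

lemma cm_G1: "cu_mult ([g],[]) x = Some (g # fst x, snd x)"
  by (cases x) (simp add: cu_mult_def)

lemma Br_nil_shift: "n 0 = g \<Longrightarrow> (g # i, j) \<in> Br ([], d) n \<longleftrightarrow> (i, j) \<in> Br ([], d @ [g]) (shft n)"
proof
  assume n0: "n 0 = g" and "(g # i, j) \<in> Br ([], d) n"
  then obtain l where l: "(g # i, j) = (nl n l, d @ nl n l)" by (auto simp: Br_mem)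
  then obtain l' where "l = Suc l'" by (cases l) auto
  then show "(i, j) \<in> Br ([], d @ [g]) (shft n)" using l n0 by (auto simp: Br_mem nl_Suc)
next
  assume n0: "n 0 = g" and "(i, j) \<in> Br ([], d @ [g]) (shft n)"
  then obtain l where l: "(i, j) = (nl (shft n) l, d @ [g] @ nl (shft n) l)" by (auto simp: Br_mem)
  then have "(g # i, j) = (nl n (Suc l), d @ nl n (Suc l))" using n0 by (simp add: nl_Suc)
  then show "(g # i, j) \<in> Br ([], d) n" by (auto simp: Br_mem)
qed

lemma Br_nil_noshift: "n 0 \<noteq> g \<Longrightarrow> (g # i, j) \<notin> Br ([], d) n"
proof
  assume n0: "n 0 \<noteq> g" and "(g # i, j) \<in> Br ([], d) n"
  then obtain l where l: "(g # i, j) = (nl n l, d @ nl n l)" by (auto simp: Br_mem)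
  then obtain l' where "l = Suc l'" by (cases l) auto
  then show False using l n0 by (auto simp: nl_Suc)
qed

lemma good_G1: "good (cu_mult ([g],[]))"
  unfolding good_def
proof (intro allI impI)
  fix v n assume w: "wsc v"
  obtain c d where v: "v = (c,d)" by (cases v)
  show "pre (cu_mult ([g],[])) (Br v n) = {} \<or> (\<exists>v' n'. wsc v' \<and> pre (cu_mult ([g],[])) (Br v n) = Br v' n')"
  proof (cases c)
    case Nil
    show ?thesis
    proof (cases "n 0 = g")
      case True
      have "pre (cu_mult ([g],[])) (Br v n) = Br ([], d @ [g]) (shft n)"
        using Br_nil_shift[of n g, OF True] by (auto simp: pre_def cm_G1 v Nil)
      then show ?thesis by (auto simp: wsc_def)
    next
      case False
      have "pre (cu_mult ([g],[])) (Br v n) = {}"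
        using Br_nil_noshift[of n g, OF False] by (auto simp: pre_def cm_G1 v Nil)
      then show ?thesis by simp
    qed
  next
    case (Cons g' c')
    show ?thesis
    proof (cases "g' = g")
      case True
      have "pre (cu_mult ([g],[])) (Br v n) = Br (c', d) n"
        by (auto simp: pre_def cm_G1 v Cons True Br_mem)
      moreover have "wsc (c', d)" using w by (auto simp: wsc_def v Cons True split: if_splits)
      ultimately show ?thesis by blast
    next
      case False
      have "pre (cu_mult ([g],[])) (Br v n) = {}"
        using False by (auto simp: pre_def cm_G1 v Cons Br_mem)
      then show ?thesis by simp
    qed
  qed
qed

lemma cm_G2: "cu_mult ([],[g]) (i,j) = (case i of [] \<Rightarrow> Some ([], j @ [g]) | g' # i' \<Rightarrow> if g' = g then Some (i', j) else None)"
  by (cases i) (auto simp: cu_mult_def)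

lemma Br_cons: "(g # i, j) \<in> Br (g # c, d) n \<longleftrightarrow> (i, j) \<in> Br (c, d) n"
  by (auto simp: Br_mem)

lemma Br_fst_cons: "x \<in> Br (g # c, d) n \<Longrightarrow> \<exists>i. x = (g # i, snd x)"
  by (auto simp: Br_mem)

lemma Br_nil_nil: "([], j) \<in> Br ([], d) n \<longleftrightarrow> j = d"
proof
  assume "([], j) \<in> Br ([], d) n"
  then obtain l where "([], j) = (nl n l, d @ nl n l)" by (auto simp: Br_mem)
  then show "j = d" by (cases l) (auto simp: nl_Suc)
next
  assume "j = d" then show "([], j) \<in> Br ([], d) n" unfolding Br_mem by (rule_tac x=0 in exI) simp
qed

lemma Br_nil_ne: "c \<noteq> [] \<Longrightarrow> ([], j) \<notin> Br (c, d) n"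
  by (auto simp: Br_mem)

lemma Br_gcons: "x \<in> Br ([], d') (gcons g n) \<longleftrightarrow> x = ([], d') \<or> (\<exists>i j. x = (g # i, j) \<and> (i, j) \<in> Br ([], d' @ [g]) n)"
proof
  assume "x \<in> Br ([], d') (gcons g n)"
  then obtain l where l: "x = (nl (gcons g n) l, d' @ nl (gcons g n) l)" by (auto simp: Br_mem)
  show "x = ([], d') \<or> (\<exists>i j. x = (g # i, j) \<and> (i, j) \<in> Br ([], d' @ [g]) n)"
  proof (cases l)
    case 0 then show ?thesis using l by simp
  next
    case (Suc l') then show ?thesis using l by (auto simp: Br_mem)
  qed
next
  assume "x = ([], d') \<or> (\<exists>i j. x = (g # i, j) \<and> (i, j) \<in> Br ([], d' @ [g]) n)"
  then show "x \<in> Br ([], d') (gcons g n)"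
  proof
    assume "x = ([], d')" then show ?thesis unfolding Br_mem by (rule_tac x=0 in exI) simp
  next
    assume "\<exists>i j. x = (g # i, j) \<and> (i, j) \<in> Br ([], d' @ [g]) n"
    then obtain l where "x = (g # nl n l, d' @ [g] @ nl n l)" by (auto simp: Br_mem)
    then show ?thesis unfolding Br_mem by (rule_tac x="Suc l" in exI) simp
  qed
qed

lemma Some_img: "Some a \<in> Some ` B \<longleftrightarrow> a \<in> B" by auto
lemma None_img: "None \<notin> Some ` B" by auto

lemma mem_G2: "x \<in> pre (cu_mult ([],[g])) (Br (c,d) n) \<longleftrightarrow> (fst x = [] \<and> ([], snd x @ [g]) \<in> Br (c,d) n) \<or> (\<exists>i'. fst x = g # i' \<and> (i', snd x) \<in> Br (c,d) n)"
  proof (cases x)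
    case (Pair i j)
    show ?thesis
    proof (cases i)
      case Nil then show ?thesis by (simp only: Pair pre_def cm_G2 mem_Collect_eq list.case Some_img fst_conv snd_conv) simp
    next
      case (Cons g' i') then show ?thesis
        by (cases "g' = g") (simp_all only: Pair pre_def cm_G2 mem_Collect_eq list.case Some_img None_img if_True if_False fst_conv snd_conv, auto)
    qed
  qed

lemma good_G2: "good (cu_mult ([],[g]))"
  unfolding good_def
proof (intro allI impI)
  fix v n assume w: "wsc v"
  obtain c d where v: "v = (c,d)" by (cases v)
  let ?P = "pre (cu_mult ([],[g])) (Br v n)"
  have mem: "x \<in> ?P \<longleftrightarrow> (fst x = [] \<and> ([], snd x @ [g]) \<in> Br (c,d) n) \<or> (\<exists>i'. fst x = g # i' \<and> (i', snd x) \<in> Br (c,d) n)" for x :: cu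
    unfolding v by (rule mem_G2)
  show "?P = {} \<or> (\<exists>v' n'. wsc v' \<and> ?P = Br v' n')"
  proof (cases "c = [] \<and> (\<exists>d'. d = d' @ [g])")
    case True
    then obtain d' where c: "c = []" and d: "d = d' @ [g]" by blast
    have "?P = Br ([], d') (gcons g n)"
    proof (rule set_eqI)
      fix x :: cu
      obtain i j where x: "x = (i,j)" by (cases x)
      have "x \<in> ?P \<longleftrightarrow> (i = [] \<and> j = d') \<or> (\<exists>i'. i = g # i' \<and> (i', j) \<in> Br ([], d' @ [g]) n)"
        unfolding mem x c d Br_nil_nil by simp
      also have "\<dots> \<longleftrightarrow> x \<in> Br ([], d') (gcons g n)"
        unfolding Br_gcons x by auto
      finally show "x \<in> ?P \<longleftrightarrow> x \<in> Br ([], d') (gcons g n)" .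
    qed
    then show ?thesis by (auto simp: wsc_def)
  next
    case False
    have "?P = Br (g # c, d) n"
    proof (rule set_eqI)
      fix x :: cu
      obtain i j where x: "x = (i,j)" by (cases x)
      have no: "\<not> ([], j @ [g]) \<in> Br (c,d) n"
      proof
        assume a: "([], j @ [g]) \<in> Br (c,d) n"
        then have c0: "c = []" using Br_nil_ne[of c "j @ [g]" d n] by auto
        then have "j @ [g] = d" using a Br_nil_nil[of "j @ [g]" d n] by simp
        then show False using False c0 by auto
      qed
      have "x \<in> ?P \<longleftrightarrow> (\<exists>i'. i = g # i' \<and> (i', j) \<in> Br (c,d) n)"
        unfolding mem x using no by simp
      also have "\<dots> \<longleftrightarrow> x \<in> Br (g # c, d) n"
      proof
        assume "\<exists>i'. i = g # i' \<and> (i', j) \<in> Br (c,d) n"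
        then obtain i' where "i = g # i'" "(i', j) \<in> Br (c,d) n" by blast
        then show "x \<in> Br (g # c, d) n" using Br_cons[of g i' j c d n] x by simp
      next
        assume a: "x \<in> Br (g # c, d) n"
        then obtain i' where xi: "x = (g # i', snd x)" using Br_fst_cons[of x g c d n] by blast
        then have "(i', j) \<in> Br (c,d) n" using a Br_cons[of g i' j c d n] x by simp
        then show "\<exists>i'. i = g # i' \<and> (i', j) \<in> Br (c,d) n" using xi x by simp
      qed
      finally show "x \<in> ?P \<longleftrightarrow> x \<in> Br (g # c, d) n" .
    qed
    moreover have "wsc (g # c, d)"
    proof (cases "c = []")
      case True
      have "d = [] \<or> last d \<noteq> g"
      proof (rule ccontr)
        assume "\<not> (d = [] \<or> last d \<noteq> g)"
        then have "d = butlast d @ [g]" by (metis append_butlast_last_id)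
        then show False using False True by metis
      qed
      then show ?thesis using True by (auto simp: wsc_def)
    next
      case False
      then show ?thesis using w by (auto simp: wsc_def v)
    qed
    ultimately show ?thesis by blast
  qed
qed

definition swp :: "(cu \<Rightarrow> cu option) \<Rightarrow> cu \<Rightarrow> cu option" where
  "swp h x = map_option prod.swap (h (prod.swap x))"

lemma Br_swap: "prod.swap ` Br v n = Br (prod.swap v) n"
  by (auto simp: Br_def branch_def image_iff)

lemma wsc_swap: "wsc (prod.swap v) = wsc v" by (auto simp: wsc_def)

lemma pre_swp: "pre (swp h) B = prod.swap ` pre h (prod.swap ` B)"
  by (auto simp: pre_def swp_def image_iff) force+

lemma good_swp: assumes "good h" shows "good (swp h)"
  unfolding good_def
proof (intro allI impI)
  fix v n assume w: "wsc v"
  have e: "pre (swp h) (Br v n) = prod.swap ` pre h (Br (prod.swap v) n)"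
    by (simp add: pre_swp Br_swap)
  have "pre h (Br (prod.swap v) n) = {} \<or> (\<exists>v' n'. wsc v' \<and> pre h (Br (prod.swap v) n) = Br v' n')"
    using assms w wsc_swap unfolding good_def by blast
  then show "pre (swp h) (Br v n) = {} \<or> (\<exists>v' n'. wsc v' \<and> pre (swp h) (Br v n) = Br v' n')"
  proof
    assume "pre h (Br (prod.swap v) n) = {}" then show ?thesis using e by simp
  next
    assume "\<exists>v' n'. wsc v' \<and> pre h (Br (prod.swap v) n) = Br v' n'"
    then obtain v' n' where "wsc v'" "pre h (Br (prod.swap v) n) = Br v' n'" by blast
    then show ?thesis using e Br_swap wsc_swap by metis
  qed
qed

lemma cm_R1: "cu_mult (i,j) ([g],[]) = (case j of [] \<Rightarrow> Some (i@[g], []) | g'#j' \<Rightarrow> if g' = g then Some (i, j') else None)"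
  by (cases j) (auto simp: cu_mult_def Cons_eq_append_conv append_eq_Cons_conv)
lemma cm_R2: "cu_mult (i,j) ([],[g]) = Some (i, g # j)"
  by (cases j) (auto simp: cu_mult_def)

lemma G3_swp: "(\<lambda>q. cu_mult q ([g],[])) = swp (cu_mult ([],[g]))"
proof
  fix x :: cu
  obtain i j where x: "x = (i,j)" by (cases x)
  show "cu_mult x ([g],[]) = swp (cu_mult ([],[g])) x"
    by (cases j) (simp_all add: x swp_def cm_G2 cm_R1)
qed

lemma G4_swp: "(\<lambda>q. cu_mult q ([],[g])) = swp (cu_mult ([g],[]))"
proof
  fix x :: cu
  obtain i j where x: "x = (i,j)" by (cases x)
  show "cu_mult x ([],[g]) = swp (cu_mult ([g],[])) x"
    by (simp add: x swp_def cm_G1 cm_R2)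
qed

lemma good_G3: "good (\<lambda>q. cu_mult q ([g],[]))" unfolding G3_swp by (rule good_swp[OF good_G2])
lemma good_G4: "good (\<lambda>q. cu_mult q ([],[g]))" unfolding G4_swp by (rule good_swp[OF good_G1])

lemma ZS_Acal: "ZS F \<Longrightarrow> F \<in> Acal" by (simp add: ZS_def)

lemma dd: "conv (delta p) (delta q) = delta r" if "cu_mult p q = Some r"
  using that by (simp add: conv_delta_delta)

lemma ZS_G1: "ZS F \<Longrightarrow> ZS (conv (delta ([g],[])) F)"
  by (simp add: conv_delta_left ZS_push good_G1)
lemma ZS_G2: "ZS F \<Longrightarrow> ZS (conv (delta ([],[g])) F)"
  by (simp add: conv_delta_left ZS_push good_G2)
lemma ZS_G3: "ZS F \<Longrightarrow> ZS (conv F (delta ([g],[])))"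
  by (simp add: conv_delta_right ZS_push good_G3)
lemma ZS_G4: "ZS F \<Longrightarrow> ZS (conv F (delta ([],[g])))"
  by (simp add: conv_delta_right ZS_push good_G4)

lemma ZS_L1: "ZS F \<Longrightarrow> ZS (conv (delta (a,[])) F)"
proof (induction a arbitrary: F)
  case Nil then show ?case using conv_e_left[of F] by (simp add: delta_e_def)
next
  case (Cons g a)
  have e: "delta (g # a, []) = conv (delta ([g],[])) (delta (a,[]))"
    by (rule dd[symmetric]) (simp add: cu_mult_def)
  have "conv (delta (g # a, [])) F = conv (delta ([g],[])) (conv (delta (a,[])) F)"
    unfolding e by (rule conv_assoc) (use Cons.prems ZS_Acal delta_Acal in auto)
  then show ?case using Cons ZS_G1 by simp
qed

lemma ZS_L2: "ZS F \<Longrightarrow> ZS (conv (delta ([],b)) F)"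
proof (induction b arbitrary: F rule: rev_induct)
  case Nil then show ?case using conv_e_left[of F] by (simp add: delta_e_def)
next
  case (snoc g b)
  have e: "delta ([], b @ [g]) = conv (delta ([],[g])) (delta ([],b))"
    by (rule dd[symmetric]) (simp add: cu_mult_def)
  have "conv (delta ([], b @ [g])) F = conv (delta ([],[g])) (conv (delta ([],b)) F)"
    unfolding e by (rule conv_assoc) (use snoc.prems ZS_Acal delta_Acal in auto)
  then show ?case using snoc ZS_G2 by simp
qed

lemma ZS_L: "ZS F \<Longrightarrow> ZS (conv (delta p) F)"
proof -
  assume Z: "ZS F"
  obtain a b where p: "p = (a,b)" by (cases p)
  have e: "delta (a,b) = conv (delta (a,[])) (delta ([],b))"
    by (rule dd[symmetric]) (simp add: cu_mult_def)
  have "conv (delta p) F = conv (delta (a,[])) (conv (delta ([],b)) F)"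
    unfolding e p by (rule conv_assoc) (use Z ZS_Acal delta_Acal in auto)
  then show ?thesis using Z ZS_L1 ZS_L2 by simp
qed

lemma ZS_R1: "ZS F \<Longrightarrow> ZS (conv F (delta (a,[])))"
proof (induction a arbitrary: F)
  case Nil then show ?case using conv_e_right[of F] by (simp add: delta_e_def)
next
  case (Cons g a)
  have e: "delta (g # a, []) = conv (delta ([g],[])) (delta (a,[]))"
    by (rule dd[symmetric]) (simp add: cu_mult_def)
  have "conv F (delta (g # a, [])) = conv (conv F (delta ([g],[]))) (delta (a,[]))"
    unfolding e by (rule conv_assoc[symmetric]) (use Cons.prems ZS_Acal delta_Acal in auto)
  then show ?case using Cons ZS_G3 by simp
qed

lemma ZS_R2: "ZS F \<Longrightarrow> ZS (conv F (delta ([],b)))"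
proof (induction b arbitrary: F rule: rev_induct)
  case Nil then show ?case using conv_e_right[of F] by (simp add: delta_e_def)
next
  case (snoc g b)
  have e: "delta ([], b @ [g]) = conv (delta ([],[g])) (delta ([],b))"
    by (rule dd[symmetric]) (simp add: cu_mult_def)
  have "conv F (delta ([], b @ [g])) = conv (conv F (delta ([],[g]))) (delta ([],b))"
    unfolding e by (rule conv_assoc[symmetric]) (use snoc.prems ZS_Acal delta_Acal in auto)
  then show ?case using snoc ZS_G4 by simp
qed

lemma ZS_R: "ZS F \<Longrightarrow> ZS (conv F (delta p))"
proof -
  assume Z: "ZS F"
  obtain a b where p: "p = (a,b)" by (cases p)
  have e: "delta (a,b) = conv (delta (a,[])) (delta ([],b))"
    by (rule dd[symmetric]) (simp add: cu_mult_def)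
  have "conv F (delta p) = conv (conv F (delta (a,[]))) (delta ([],b))"
    unfolding e p by (rule conv_assoc[symmetric]) (use Z ZS_Acal delta_Acal in auto)
  then show ?thesis using Z ZS_R1 ZS_R2 by simp
qed

lemma ZS_conv_left:
  assumes Z: "ZS f" and g: "g \<in> Acal" shows "ZS (conv g f)"
proof -
  have f: "f \<in> Acal" using Z by (simp add: ZS_def)
  have T: "asum (tens g f) UNIV" using tens_abs(1) f g by (simp add: Acal_def)
  have "infsum (conv g f) (Br v n) = 0" if w: "wsc v" for v n
  proof -
    let ?B = "Br v n"
    have 1: "infsum (conv g f) ?B = infsum (tens g f) {x. cm x \<in> Some ` ?B}"
      unfolding conv_push using fiber(2)[OF T] by (simp add: pre_def)
    have S: "{x. cm x \<in> Some ` ?B} = Sigma UNIV (\<lambda>p. pre (cu_mult p) ?B)"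
      by (auto simp: pre_def cm_def)
    have 2: "infsum (tens g f) (Sigma UNIV (\<lambda>p. pre (cu_mult p) ?B))
        = infsum (\<lambda>p. infsum (\<lambda>q. tens g f (p,q)) (pre (cu_mult p) ?B)) UNIV"
      by (rule infsum_Sigma_banach[symmetric]) (rule abs_sum_sub[OF T])
    have 3: "infsum (\<lambda>q. tens g f (p,q)) (pre (cu_mult p) ?B) = 0" for p
    proof -
      have "infsum (\<lambda>q. tens g f (p,q)) (pre (cu_mult p) ?B) = g p * infsum f (pre (cu_mult p) ?B)"
        by (simp add: tens_def infsum_cmult_right')
      also have "infsum f (pre (cu_mult p) ?B) = infsum (conv (delta p) f) ?B"
        unfolding conv_delta_left using fiber(2)[of f "cu_mult p" ?B] f by (simp add: pre_def Acal_def)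
      also have "\<dots> = 0" using ZS_L[OF Z, of p] w unfolding ZS_def by blast
      finally show ?thesis by simp
    qed
    show ?thesis using 1 2 3 S by simp
  qed
  then show ?thesis using conv_Acal[OF g f] by (simp add: ZS_def)
qed

lemma ZS_conv_right:
  assumes Z: "ZS f" and g: "g \<in> Acal" shows "ZS (conv f g)"
proof -
  have f: "f \<in> Acal" using Z by (simp add: ZS_def)
  have T: "asum (tens f g) UNIV" using tens_abs(1) f g by (simp add: Acal_def)
  have T': "asum (tens f g \<circ> prod.swap) UNIV"
    using T summable_on_reindex[OF inj_swap, of "\<lambda>x. norm (tens f g x)" UNIV]
    by (simp add: o_def)
  have "infsum (conv f g) (Br v n) = 0" if w: "wsc v" for v n
  proof -
    let ?B = "Br v n"
    let ?S = "Sigma UNIV (\<lambda>q. pre (\<lambda>p. cu_mult p q) ?B)"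
    have 1: "infsum (conv f g) ?B = infsum (tens f g) {x. cm x \<in> Some ` ?B}"
      unfolding conv_push using fiber(2)[OF T] by (simp add: pre_def)
    have S: "{x. cm x \<in> Some ` ?B} = prod.swap ` ?S"
      by (auto simp: pre_def cm_def image_iff)
    have 2: "infsum (tens f g) (prod.swap ` ?S) = infsum (tens f g \<circ> prod.swap) ?S"
      by (rule infsum_reindex) simp
    have e2b: "infsum (tens f g \<circ> prod.swap) ?S
        = infsum (\<lambda>q. infsum (\<lambda>p. (tens f g \<circ> prod.swap) (q,p)) (pre (\<lambda>p. cu_mult p q) ?B)) UNIV"
      by (rule infsum_Sigma_banach[symmetric]) (rule abs_sum_sub[OF T'])
    have 3: "infsum (\<lambda>p. (tens f g \<circ> prod.swap) (q,p)) (pre (\<lambda>p. cu_mult p q) ?B) = 0" for q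
    proof -
      have "infsum (\<lambda>p. (tens f g \<circ> prod.swap) (q,p)) (pre (\<lambda>p. cu_mult p q) ?B) = g q * infsum f (pre (\<lambda>p. cu_mult p q) ?B)"
        by (simp add: tens_def infsum_cmult_left' mult.commute)
      also have "infsum f (pre (\<lambda>p. cu_mult p q) ?B) = infsum (conv f (delta q)) ?B"
        unfolding conv_delta_right using fiber(2)[of f "\<lambda>p. cu_mult p q" ?B] f by (simp add: pre_def Acal_def)
      also have "\<dots> = 0" using ZS_R[OF Z, of q] w unfolding ZS_def by blast
      finally show ?thesis by simp
    qed
    show ?thesis using 1 2 e2b 3 S by simp
  qed
  then show ?thesis using conv_Acal[OF f g] by (simp add: ZS_def)
qed

definition Zset where "Zset = {F. ZS F}"

lemma Acal_diff: "f \<in> Acal \<Longrightarrow> g \<in> Acal \<Longrightarrow> (\<lambda>x. f x - g x) \<in> Acal"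
  using Acal_add[of f "\<lambda>x. (-1) * g x"] Acal_scale[of g "-1"] by simp

lemma Acal_summable: "f \<in> Acal \<Longrightarrow> f summable_on A"
  by (simp add: Acal_def abs_sum_sub)

lemma infsum_diff:
  fixes f g :: "'a \<Rightarrow> complex"
  assumes "f summable_on A" "g summable_on A"
  shows "infsum (\<lambda>x. f x - g x) A = infsum f A - infsum g A"
proof -
  have "(\<lambda>x. - g x) summable_on A" using assms(2) by (simp add: summable_on_uminus)
  then have "infsum (\<lambda>x. f x + - g x) A = infsum f A + infsum (\<lambda>x. - g x) A"
    using assms(1) by (rule infsum_add[rotated])
  then show ?thesis by (simp add: infsum_uminus)
qed

lemma ZS_0: "ZS (\<lambda>_. 0)" by (simp add: ZS_def Acal_0)

lemma ZS_add: "ZS f \<Longrightarrow> ZS g \<Longrightarrow> ZS (\<lambda>x. f x + g x)"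
  unfolding ZS_def by (auto simp: Acal_add infsum_add Acal_summable)

lemma ZS_scale: "ZS f \<Longrightarrow> ZS (\<lambda>x. c * f x)"
  unfolding ZS_def by (auto simp: Acal_scale infsum_cmult_right')

lemma Zset_ideal: "two_sided_ideal Zset"
  unfolding two_sided_ideal_def Zset_def
  using ZS_0 ZS_add ZS_scale ZS_conv_left ZS_conv_right by (auto simp: ZS_def)

lemma l1norm_bound: assumes "f \<in> Acal" shows "norm (infsum f A) \<le> l1norm f"
proof -
  have "norm (infsum f A) \<le> infsum (\<lambda>x. norm (f x)) A"
    by (rule norm_infsum_bound) (use assms in \<open>simp add: Acal_def abs_sub\<close>)
  also have "\<dots> \<le> infsum (\<lambda>x. norm (f x)) UNIV"
    by (rule infsum_mono_neutral) (use assms in \<open>auto simp: Acal_def abs_sub\<close>)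
  finally show ?thesis by (simp add: l1norm_def)
qed

lemma Zset_closed: "l1_closed Zset"
  unfolding l1_closed_def
proof (intro allI impI)
  fix u f assume a: "(\<forall>n. u n \<in> Zset) \<and> f \<in> Acal \<and> (\<lambda>n. l1norm (\<lambda>t. u n t - f t)) \<longlonglongrightarrow> 0"
  have uA: "u k \<in> Acal" for k using a by (simp add: Zset_def ZS_def)
  have "infsum f (Br v n) = 0" if w: "wsc v" for v n
  proof -
    have "norm (infsum f (Br v n)) \<le> l1norm (\<lambda>t. u k t - f t)" for k
    proof -
      have "infsum (\<lambda>t. u k t - f t) (Br v n) = infsum (u k) (Br v n) - infsum f (Br v n)"
        by (rule infsum_diff) (use uA a in \<open>auto intro: Acal_summable\<close>)
      also have "infsum (u k) (Br v n) = 0" using a w unfolding Zset_def ZS_def by blast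
      finally have "norm (infsum f (Br v n)) = norm (infsum (\<lambda>t. u k t - f t) (Br v n))" by simp
      also have "\<dots> \<le> l1norm (\<lambda>t. u k t - f t)"
        by (rule l1norm_bound) (use uA a Acal_diff in auto)
      finally show ?thesis .
    qed
    then have "norm (infsum f (Br v n)) \<le> 0"
      using a by (intro LIMSEQ_le_const[of "\<lambda>k. l1norm (\<lambda>t. u k t - f t)"]) auto
    then show ?thesis by simp
  qed
  then show "f \<in> Zset" using a by (simp add: Zset_def ZS_def)
qed

lemma nil_in_Br: "([],[]) \<in> Br v n \<longleftrightarrow> v = ([],[])"
  by (cases v) (auto simp: Br_mem intro: exI[of _ 0])

lemma gg_in_Br: assumes w: "wsc v" shows "([g],[g]) \<in> Br v n \<longleftrightarrow> v = ([],[]) \<and> n 0 = g"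
proof
  assume "([g],[g]) \<in> Br v n"
  then obtain l where l: "([g],[g]) = (fst v @ nl n l, snd v @ nl n l)" by (auto simp: Br_mem)
  show "v = ([],[]) \<and> n 0 = g"
  proof (cases l)
    case 0 then show ?thesis using l w by (cases v) (auto simp: wsc_def)
  next
    case (Suc l')
    have "length [g] = length (fst v) + Suc l'" using l Suc by (metis fst_conv length_append length_nl)
    then have "l' = 0" "fst v = []" by auto
    moreover have "length [g] = length (snd v) + Suc l'" using l Suc by (metis snd_conv length_append length_nl)
    then have "snd v = []" by auto
    ultimately show ?thesis using l Suc by (cases v) (auto simp: nl_Suc)
  qed
next
  assume "v = ([],[]) \<and> n 0 = g"
  then show "([g],[g]) \<in> Br v n" unfolding Br_mem by (rule_tac x=1 in exI) (auto simp: nl_Suc)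
qed

lemma ZS_f0: "ZS f0"
proof -
  have fe: "f0 = (\<lambda>t. delta ([],[]) t - delta ([G1],[G1]) t - delta ([G2],[G2]) t)" by (simp add: f0_def)
  have A: "f0 \<in> Acal" unfolding fe by (intro Acal_diff delta_Acal)
  have "infsum f0 (Br v n) = 0" if w: "wsc v" for v n
  proof -
    have "infsum f0 (Br v n) = infsum (delta ([],[])) (Br v n) - infsum (delta ([G1],[G1])) (Br v n) - infsum (delta ([G2],[G2])) (Br v n)"
      unfolding fe
      by (subst infsum_diff, auto intro!: Acal_summable Acal_diff delta_Acal, subst infsum_diff, auto intro!: Acal_summable delta_Acal)
    also have "\<dots> = 0"
      unfolding infsum_delta using nil_in_Br[of v n] gg_in_Br[OF w, of G1 n] gg_in_Br[OF w, of G2 n]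
      by (cases "n 0") auto
    finally show ?thesis .
  qed
  then show ?thesis using A by (simp add: ZS_def)
qed

lemma not_ZS_e: "\<not> ZS delta_e"
proof
  assume "ZS delta_e"
  then have "infsum delta_e (Br ([],[]) (\<lambda>_. G1)) = 0" by (simp add: ZS_def wsc_def)
  then show False using nil_in_Br by (simp add: delta_e_def infsum_delta)
qed

definition ext :: "gen \<Rightarrow> cu \<Rightarrow> cu" where "ext g p = (fst p @ [g], snd p @ [g])"

definition dgen :: "cu \<Rightarrow> cu \<Rightarrow> complex" where
  "dgen y = (\<lambda>t. delta y t - delta (ext G1 y) t - delta (ext G2 y) t)"

lemma Acal_uminus: "f \<in> Acal \<Longrightarrow> (\<lambda>x. - f x) \<in> Acal" by (simp add: Acal_def)

lemma conv_uminus2: "conv h (\<lambda>x. - g x) = (\<lambda>t. - conv h g t)"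
  using conv_scale2[of h "-1" g] by simp
lemma conv_uminus1: "conv (\<lambda>x. - g x) h = (\<lambda>t. - conv g h t)"
  using conv_scale1[of "-1" g h] by simp

lemma conv_diff2: "f \<in> Acal \<Longrightarrow> g \<in> Acal \<Longrightarrow> h \<in> Acal \<Longrightarrow> conv h (\<lambda>x. f x - g x) = (\<lambda>t. conv h f t - conv h g t)"
proof -
  assume A: "f \<in> Acal" "g \<in> Acal" "h \<in> Acal"
  have "conv h (\<lambda>x. f x - g x) = conv h (\<lambda>x. f x + (-1) * g x)" by simp
  also have "\<dots> = (\<lambda>t. conv h f t + conv h (\<lambda>x. (-1) * g x) t)"
    by (rule conv_add2) (use A Acal_uminus in auto)
  finally show ?thesis by (simp add: conv_uminus2)
qed

lemma conv_diff1: "f \<in> Acal \<Longrightarrow> g \<in> Acal \<Longrightarrow> h \<in> Acal \<Longrightarrow> conv (\<lambda>x. f x - g x) h = (\<lambda>t. conv f h t - conv g h t)"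
proof -
  assume A: "f \<in> Acal" "g \<in> Acal" "h \<in> Acal"
  have "conv (\<lambda>x. f x - g x) h = conv (\<lambda>x. f x + (-1) * g x) h" by simp
  also have "\<dots> = (\<lambda>t. conv f h t + conv (\<lambda>x. (-1) * g x) h t)"
    by (rule conv_add1) (use A Acal_uminus in auto)
  finally show ?thesis by (simp add: conv_uminus1)
qed

lemma dgen_eq: "dgen (a,b) = conv (conv (delta (a,[])) f0) (delta ([],b))"
proof -
  have f0e: "f0 = (\<lambda>t. (\<lambda>t. delta ([],[]) t - delta ([G1],[G1]) t) t - delta ([G2],[G2]) t)" by (simp add: f0_def)
  have cl: "conv (delta (a,[])) (delta (i,j)) = delta (a @ i, j)" for i j
    by (simp add: conv_delta_delta cu_mult_def)
  have cr: "conv (delta (i,j)) (delta ([],b)) = delta (i, b @ j)" for i j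
    by (cases j) (simp_all add: conv_delta_delta cu_mult_def)
  have 1: "conv (delta (a,[])) f0 = (\<lambda>t. delta (a,[]) t - delta (a@[G1],[G1]) t - delta (a@[G2],[G2]) t)"
    unfolding f0e by (simp add: conv_diff2 Acal_diff delta_Acal cl)
  show ?thesis unfolding 1
    by (simp add: conv_diff1 Acal_diff delta_Acal cr dgen_def ext_def)
qed

lemma id_Acal: "two_sided_ideal I \<Longrightarrow> f \<in> I \<Longrightarrow> f \<in> Acal"
  unfolding two_sided_ideal_def by (elim conjE) (rule subsetD)
lemma id_0: "two_sided_ideal I \<Longrightarrow> (\<lambda>_. 0) \<in> I"
  unfolding two_sided_ideal_def by (elim conjE)
lemma id_add: "two_sided_ideal I \<Longrightarrow> f \<in> I \<Longrightarrow> g \<in> I \<Longrightarrow> (\<lambda>t. f t + g t) \<in> I"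
  unfolding two_sided_ideal_def by (elim conjE) (drule bspec, assumption, drule bspec, assumption)
lemma id_scale: "two_sided_ideal I \<Longrightarrow> f \<in> I \<Longrightarrow> (\<lambda>t. c * f t) \<in> I"
  unfolding two_sided_ideal_def by (elim conjE) (drule spec[where x=c], drule bspec, assumption)
lemma id_convl: "two_sided_ideal I \<Longrightarrow> g \<in> Acal \<Longrightarrow> f \<in> I \<Longrightarrow> conv g f \<in> I"
  unfolding two_sided_ideal_def by (elim conjE) (drule bspec, assumption, drule bspec, assumption, elim conjE)
lemma id_convr: "two_sided_ideal I \<Longrightarrow> g \<in> Acal \<Longrightarrow> f \<in> I \<Longrightarrow> conv f g \<in> I"
  unfolding two_sided_ideal_def by (elim conjE) (drule bspec, assumption, drule bspec, assumption, elim conjE)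

lemma ideal_sum:
  assumes I: "two_sided_ideal I" and F: "finite S" and m: "\<And>y. y \<in> S \<Longrightarrow> u y \<in> I"
  shows "(\<lambda>t. \<Sum>y\<in>S. c y * u y t) \<in> I"
  using F m
proof (induction S rule: finite_induct)
  case empty then show ?case using id_0[OF I] by simp
next
  case (insert y S)
  have a: "(\<lambda>t. c y * u y t) \<in> I" using id_scale[OF I] insert by simp
  have b: "(\<lambda>t. \<Sum>y\<in>S. c y * u y t) \<in> I" using insert by simp
  have "(\<lambda>t. (\<lambda>t. c y * u y t) t + (\<lambda>t. \<Sum>y\<in>S. c y * u y t) t) \<in> I"
    using id_add[OF I a b] .
  then show ?case using insert by simp
qed

lemma dgen_in: assumes I: "two_sided_ideal I" and f0: "f0 \<in> I" shows "dgen y \<in> I"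
proof -
  obtain a b where y: "y = (a,b)" by (cases y)
  have "conv (delta (a,[])) f0 \<in> I" using id_convl[OF I delta_Acal f0] .
  then have "conv (conv (delta (a,[])) f0) (delta ([],b)) \<in> I" using id_convr[OF I delta_Acal] by blast
  then show ?thesis by (simp add: y dgen_eq)
qed

definition SN :: "nat \<Rightarrow> cu set" where "SN N = {x. length (fst x) + length (snd x) < N}"

lemma UNIV_gen: "(UNIV :: gen set) = {G1, G2}" using gen.exhaust by auto

lemma finite_SN: "finite (SN N)"
proof -
  have f: "finite {xs :: word. set xs \<subseteq> UNIV \<and> length xs \<le> N}"
    by (rule finite_lists_length_le) (simp add: UNIV_gen)
  have "SN N \<subseteq> {xs :: word. set xs \<subseteq> UNIV \<and> length xs \<le> N} \<times> {xs :: word. set xs \<subseteq> UNIV \<and> length xs \<le> N}"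
    by (auto simp: SN_def)
  then show ?thesis using f finite_subset by blast
qed

definition par :: "cu \<Rightarrow> cu" where "par x = (butlast (fst x), butlast (snd x))"
definition haspar :: "cu \<Rightarrow> bool" where
  "haspar x \<longleftrightarrow> fst x \<noteq> [] \<and> snd x \<noteq> [] \<and> last (fst x) = last (snd x)"

function cf :: "(cu \<Rightarrow> complex) \<Rightarrow> cu \<Rightarrow> complex" where
  "cf f x = f x + (if haspar x then cf f (par x) else 0)"
  by auto
termination
  by (relation "Wellfounded.measure (\<lambda>(f,x). length (fst x))") (auto simp: haspar_def par_def)

declare cf.simps[simp del]

lemma wsc_haspar: "wsc x \<longleftrightarrow> \<not> haspar x" by (auto simp: wsc_def haspar_def)

lemma ext_par: "haspar x \<Longrightarrow> x = ext (last (fst x)) (par x)"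
  by (cases x) (auto simp: haspar_def par_def ext_def, metis append_butlast_last_id)

lemma haspar_ext[simp]: "haspar (ext g p)" by (simp add: haspar_def ext_def)
lemma par_ext[simp]: "par (ext g p) = p" by (simp add: par_def ext_def)
lemma last_ext[simp]: "last (fst (ext g p)) = g" by (simp add: ext_def)

lemma ext_eq: "x = ext g y \<longleftrightarrow> haspar x \<and> last (fst x) = g \<and> y = par x"
  using ext_par by fastforce

lemma Br_ext: "Br p (gcons g \<nu>) = insert p (Br (ext g p) \<nu>)"
proof (rule set_eqI)
  fix x :: cu
  show "x \<in> Br p (gcons g \<nu>) \<longleftrightarrow> x \<in> insert p (Br (ext g p) \<nu>)"
  proof
    assume "x \<in> Br p (gcons g \<nu>)"
    then obtain l where l: "x = (fst p @ nl (gcons g \<nu>) l, snd p @ nl (gcons g \<nu>) l)" by (auto simp: Br_mem)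
    show "x \<in> insert p (Br (ext g p) \<nu>)"
    proof (cases l)
      case 0 then show ?thesis using l by simp
    next
      case (Suc l') then have "x = (fst (ext g p) @ nl \<nu> l', snd (ext g p) @ nl \<nu> l')" using l by (simp add: ext_def)
      then show ?thesis by (auto simp: Br_mem)
    qed
  next
    assume "x \<in> insert p (Br (ext g p) \<nu>)"
    then show "x \<in> Br p (gcons g \<nu>)"
    proof
      assume "x = p" then show ?thesis unfolding Br_mem by (rule_tac x=0 in exI) simp
    next
      assume "x \<in> Br (ext g p) \<nu>"
      then obtain l where "x = (fst (ext g p) @ nl \<nu> l, snd (ext g p) @ nl \<nu> l)" by (auto simp: Br_mem)
      then have "x = (fst p @ nl (gcons g \<nu>) (Suc l), snd p @ nl (gcons g \<nu>) (Suc l))" by (simp add: ext_def)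
      then show ?thesis unfolding Br_mem by blast
    qed
  qed
qed

lemma p_notin_Br_ext: "p \<notin> Br (ext g p) \<nu>"
  by (auto simp: Br_mem ext_def dest: arg_cong[where f="\<lambda>x. length (fst x)"])

definition cfp :: "(cu \<Rightarrow> complex) \<Rightarrow> cu \<Rightarrow> complex" where
  "cfp f x = (if haspar x then cf f (par x) else 0)"

lemma cf_branch: assumes Z: "ZS f" shows "cfp f x + infsum f (Br x \<nu>) = 0"
proof (induction "length (fst x)" arbitrary: x \<nu> rule: less_induct)
  case less
  show ?case
  proof (cases "haspar x")
    case False
    then have "wsc x" by (simp add: wsc_haspar)
    then have "infsum f (Br x \<nu>) = 0" using Z unfolding ZS_def by blast
    then show ?thesis using False by (simp add: cfp_def)
  next
    case True
    define p where "p = par x"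
    define g where "g = last (fst x)"
    have x: "x = ext g p" using ext_par[OF True] by (simp add: p_def g_def)
    have lt: "length (fst p) < length (fst x)" using True by (simp add: p_def par_def haspar_def)
    have IH: "cfp f p + infsum f (Br p (gcons g \<nu>)) = 0" using less lt by blast
    have fs: "f summable_on Br (ext g p) \<nu>" using Z by (simp add: ZS_def Acal_summable)
    have "infsum f (Br p (gcons g \<nu>)) = f p + infsum f (Br (ext g p) \<nu>)"
      unfolding Br_ext by (rule infsum_insert[OF fs p_notin_Br_ext])
    moreover have "cfp f x = f p + cfp f p"
      using True by (simp add: cfp_def p_def[symmetric] cf.simps[of f p])
    ultimately show ?thesis using IH x by (simp add: algebra_simps)
  qed
qed

definition nu1 :: "nat \<Rightarrow> gen" where "nu1 = (\<lambda>_. G1)"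
lemma gcons_nu1: "gcons G1 nu1 = nu1" by (simp add: fun_eq_iff gcons_def nu1_def split: nat.split)

lemma cf_bound: assumes Z: "ZS f" and h: "haspar x"
  shows "cf f x = - infsum f (Br (ext G1 x) nu1)"
proof -
  have fs: "f summable_on Br (ext G1 x) nu1" using Z by (simp add: ZS_def Acal_summable)
  have 1: "cfp f x + infsum f (Br x nu1) = 0" by (rule cf_branch[OF Z])
  have "infsum f (Br x nu1) = f x + infsum f (Br (ext G1 x) nu1)"
    using Br_ext[of x G1 nu1] gcons_nu1 infsum_insert[OF fs p_notin_Br_ext] by simp
  moreover have "cf f x = f x + cfp f x" by (simp add: cfp_def cf.simps[of f x])
  ultimately have "cf f x + infsum f (Br (ext G1 x) nu1) = 0" using 1 by (simp add: add_ac)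
  then show ?thesis by (simp add: eq_neg_iff_add_eq_0)
qed

lemma infsum_compl: assumes "asum (f::'a\<Rightarrow>complex) UNIV" "finite F"
  shows "infsum (\<lambda>x. norm (f x)) (UNIV - F) = infsum (\<lambda>x. norm (f x)) UNIV - sum (\<lambda>x. norm (f x)) F"
proof -
  have "infsum (\<lambda>x. norm (f x)) (F \<union> (UNIV - F)) = infsum (\<lambda>x. norm (f x)) F + infsum (\<lambda>x. norm (f x)) (UNIV - F)"
    by (rule infsum_Un_disjoint) (use assms abs_sub in auto)
  then show ?thesis using assms by simp
qed

lemma tail_tendsto: assumes F: "asum (f::cu\<Rightarrow>complex) UNIV"
  shows "(\<lambda>N. infsum (\<lambda>x. norm (f x)) (UNIV - SN N)) \<longlonglongrightarrow> 0"
proof (rule LIMSEQ_I)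
  fix r :: real assume r: "r > 0"
  obtain F0 where F0: "finite F0" "dist (sum (\<lambda>x. norm (f x)) F0) (infsum (\<lambda>x. norm (f x)) UNIV) \<le> r/2"
    using infsum_finite_approximation[OF F, of "r/2"] r by auto
  obtain N0 where N0: "\<forall>x\<in>F0. length (fst x) + length (snd x) < N0"
  proof -
    have "finite ((\<lambda>x. length (fst x) + length (snd x)) ` F0)" using F0 by simp
    then obtain M where "\<forall>k\<in>(\<lambda>x. length (fst x) + length (snd x)) ` F0. k \<le> M"
      using finite_nat_set_iff_bounded_le by blast
    then show ?thesis using that[of "Suc M"] by force
  qed
  show "\<exists>no. \<forall>n\<ge>no. norm (infsum (\<lambda>x. norm (f x)) (UNIV - SN n) - 0) < r"
  proof (intro exI allI impI)
    fix n assume n: "N0 \<le> n"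
    have sub: "F0 \<subseteq> SN n" using N0 n by (auto simp: SN_def)
    have nn: "0 \<le> infsum (\<lambda>x. norm (f x)) (UNIV - SN n)" by (rule infsum_nonneg) auto
    have "infsum (\<lambda>x. norm (f x)) (UNIV - SN n) \<le> infsum (\<lambda>x. norm (f x)) (UNIV - F0)"
      by (rule infsum_mono_neutral) (use F abs_sub sub in auto)
    also have "\<dots> = infsum (\<lambda>x. norm (f x)) UNIV - sum (\<lambda>x. norm (f x)) F0"
      by (rule infsum_compl[OF F F0(1)])
    also have "\<dots> \<le> r/2" using F0(2) unfolding dist_real_def by linarith
    finally show "norm (infsum (\<lambda>x. norm (f x)) (UNIV - SN n) - 0) < r" using nn r by simp
  qed
qed

definition hN :: "(cu \<Rightarrow> complex) \<Rightarrow> nat \<Rightarrow> cu \<Rightarrow> complex" where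
  "hN f N = (\<lambda>t. \<Sum>y\<in>SN N. cf f y * dgen y t)"

lemma sum_ext: assumes S: "finite S"
  shows "(\<Sum>y\<in>S. c y * delta (ext g y) x) = (if haspar x \<and> last (fst x) = g \<and> par x \<in> S then c (par x) else 0)"
proof -
  have "(\<Sum>y\<in>S. c y * delta (ext g y) x) = (\<Sum>y\<in>S. if y = par x then (if haspar x \<and> last (fst x) = g then c y else 0) else 0)"
    by (rule sum.cong) (auto simp: delta_def ext_eq)
  also have "\<dots> = (if par x \<in> S then (if haspar x \<and> last (fst x) = g then c (par x) else 0) else 0)"
    by (rule sum.delta[OF S])
  finally show ?thesis by auto
qed

lemma sum_self: assumes S: "finite S"
  shows "(\<Sum>y\<in>S. c y * delta y x) = (if x \<in> S then c x else 0)"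
proof -
  have "(\<Sum>y\<in>S. c y * delta y x) = (\<Sum>y\<in>S. if y = x then c y else 0)"
    by (rule sum.cong) (auto simp: delta_def)
  also have "\<dots> = (if x \<in> S then c x else 0)" by (rule sum.delta[OF S])
  finally show ?thesis .
qed

lemma gen_cases: "g = G1 \<or> g = G2" by (cases g) auto

lemma hN_eq: "hN f N x = (if x \<in> SN N then cf f x else 0) - (if haspar x \<and> par x \<in> SN N then cf f (par x) else 0)"
proof -
  have F: "finite (SN N)" by (rule finite_SN)
  have "hN f N x = (\<Sum>y\<in>SN N. cf f y * delta y x) - (\<Sum>y\<in>SN N. cf f y * delta (ext G1 y) x) - (\<Sum>y\<in>SN N. cf f y * delta (ext G2 y) x)"
    by (simp add: hN_def dgen_def algebra_simps sum_subtractf sum.distrib)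
  also have "\<dots> = (if x \<in> SN N then cf f x else 0) - (if haspar x \<and> par x \<in> SN N then cf f (par x) else 0)"
    unfolding sum_self[OF F] sum_ext[OF F] using gen_cases[of "last (fst x)"] by auto
  finally show ?thesis .
qed

lemma par_SN: "haspar x \<Longrightarrow> x \<in> SN N \<Longrightarrow> par x \<in> SN N"
  by (auto simp: SN_def par_def haspar_def)

definition Rs :: "cu \<Rightarrow> cu set" where "Rs x = Br (ext G1 x) nu1"
definition Bd :: "nat \<Rightarrow> cu set" where "Bd N = {x. x \<notin> SN N \<and> haspar x \<and> par x \<in> SN N}"

lemma err_bound: assumes Z: "ZS f"
  shows "norm (hN f N x - f x) \<le> (if x \<in> SN N then 0 else norm (f x)) + (if x \<in> Bd N then infsum (\<lambda>y. norm (f y)) (Rs x) else 0)"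
proof (cases "x \<in> SN N")
  case True
  have "hN f N x - f x = 0"
    using True par_SN[of x N] by (simp add: hN_eq cf.simps[of f x])
  then show ?thesis using True by (simp add: Bd_def)
next
  case notS: False
  show ?thesis
  proof (cases "x \<in> Bd N")
    case True
    then have hp: "haspar x" "par x \<in> SN N" by (auto simp: Bd_def)
    have "hN f N x - f x = - cf f x" using notS hp by (simp add: hN_eq cf.simps[of f x])
    also have "\<dots> = infsum f (Rs x)" using cf_bound[OF Z hp(1)] by (simp add: Rs_def)
    finally have "norm (hN f N x - f x) = norm (infsum f (Rs x))" by simp
    also have "\<dots> \<le> infsum (\<lambda>y. norm (f y)) (Rs x)"
      by (rule norm_infsum_bound) (use Z in \<open>simp add: ZS_def Acal_def abs_sub\<close>)
    finally show ?thesis using notS True by (simp, smt (verit) norm_ge_zero)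
  next
    case False
    then have "hN f N x - f x = - f x" using notS by (auto simp: hN_eq Bd_def)
    then show ?thesis using notS False by simp
  qed
qed

lemma nl_nu1: "nl nu1 l = replicate l G1" by (simp add: nl_def nu1_def map_replicate_const)

lemma Rs_mem: "y \<in> Rs x \<longleftrightarrow> (\<exists>j. y = (fst x @ replicate (Suc j) G1, snd x @ replicate (Suc j) G1))"
  by (auto simp: Rs_def Br_mem nl_nu1 ext_def replicate_append_same)

lemma Rs_notin: "x \<notin> SN N \<Longrightarrow> y \<in> Rs x \<Longrightarrow> y \<notin> SN N"
  by (auto simp: Rs_mem SN_def)

lemma butlast_rep: "d > 0 \<Longrightarrow> butlast (a @ replicate d g) = a @ replicate (d - 1) g"
  by (cases d) (simp_all add: butlast_append replicate_append_same[symmetric])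

lemma Rs_desc: assumes x: "x \<in> Bd N" and x': "x' \<notin> SN N"
  and e: "x = (fst x' @ replicate d G1, snd x' @ replicate d G1)" and d: "d > 0"
  shows False
proof -
  have "par x = (fst x' @ replicate (d - 1) G1, snd x' @ replicate (d - 1) G1)"
    using e d by (simp add: par_def butlast_rep)
  then have "par x \<notin> SN N" using x' by (auto simp: SN_def)
  then show False using x by (simp add: Bd_def)
qed

lemma app_rep_cancel: "a @ replicate m g = b @ replicate n g \<Longrightarrow> m \<le> n \<Longrightarrow> a = b @ replicate (n - m) g"
proof -
  assume e: "a @ replicate m g = b @ replicate n g" and mn: "m \<le> n"
  have "replicate n g = replicate (n - m) g @ replicate m g" using mn
    by (metis le_add_diff_inverse2 replicate_add)
  then show ?thesis using e by simp
qed

lemma Rs_inj: assumes x: "x \<in> Bd N" and x': "x' \<in> Bd N" and y: "y \<in> Rs x" "y \<in> Rs x'"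
  shows "x = x'"
proof -
  obtain a where a: "y = (fst x @ replicate (Suc a) G1, snd x @ replicate (Suc a) G1)" using y(1) Rs_mem by blast
  obtain b where b: "y = (fst x' @ replicate (Suc b) G1, snd x' @ replicate (Suc b) G1)" using y(2) Rs_mem by blast
  have xS: "x \<notin> SN N" "x' \<notin> SN N" using x x' by (auto simp: Bd_def)
  have eq1: "fst x @ replicate (Suc a) G1 = fst x' @ replicate (Suc b) G1" using a b by (metis fst_conv)
  have eq2: "snd x @ replicate (Suc a) G1 = snd x' @ replicate (Suc b) G1" using a b by (metis snd_conv)
  consider "a = b" | "a < b" | "b < a" by linarith
  then show ?thesis
  proof cases
    case 1 then show ?thesis using a b by (cases x, cases x') auto
  next
    case 2
    have "fst x = fst x' @ replicate (Suc b - Suc a) G1" "snd x = snd x' @ replicate (Suc b - Suc a) G1"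
      using app_rep_cancel[OF eq1] app_rep_cancel[OF eq2] 2 by auto
    then have "x = (fst x' @ replicate (Suc b - Suc a) G1, snd x' @ replicate (Suc b - Suc a) G1)"
      by (metis prod.collapse)
    then show ?thesis using Rs_desc[OF x xS(2)] 2 by simp
  next
    case 3
    have "fst x' = fst x @ replicate (Suc a - Suc b) G1" "snd x' = snd x @ replicate (Suc a - Suc b) G1"
      using app_rep_cancel[OF eq1[symmetric]] app_rep_cancel[OF eq2[symmetric]] 3 by auto
    then have "x' = (fst x @ replicate (Suc a - Suc b) G1, snd x @ replicate (Suc a - Suc b) G1)"
      by (metis prod.collapse)
    then show ?thesis using Rs_desc[OF x' xS(1)] 3 by simp
  qed
qed

lemma B2_sum: assumes f: "asum f UNIV"
  shows "(\<lambda>x. if x \<in> Bd N then infsum (\<lambda>y. norm (f y)) (Rs x) else 0) summable_on UNIV"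
    "infsum (\<lambda>x. if x \<in> Bd N then infsum (\<lambda>y. norm (f y)) (Rs x) else 0) UNIV \<le> infsum (\<lambda>y. norm (f y)) (UNIV - SN N)"
proof -
  let ?Sig = "Sigma (Bd N) Rs"
  have inj: "inj_on snd ?Sig" using Rs_inj by (auto simp: inj_on_def)
  have sub: "snd ` ?Sig \<subseteq> UNIV - SN N" using Rs_notin by (auto simp: Bd_def)
  have s0: "(\<lambda>y. norm (f y)) summable_on snd ` ?Sig" using abs_sub[OF f] .
  have s1: "(\<lambda>(x,y). norm (f y)) summable_on ?Sig"
  proof -
    have "((\<lambda>y. norm (f y)) \<circ> snd) summable_on ?Sig" using summable_on_reindex[OF inj] s0 by blast
    then show ?thesis by (simp add: o_def case_prod_unfold)
  qed
  have e1: "infsum (\<lambda>x. infsum (\<lambda>y. norm (f y)) (Rs x)) (Bd N) = infsum (\<lambda>(x,y). norm (f y)) ?Sig"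
    using infsum_Sigma'_banach[OF s1] by simp
  have e2: "infsum (\<lambda>(x,y). norm (f y)) ?Sig = infsum (\<lambda>y. norm (f y)) (snd ` ?Sig)"
  proof -
    have "infsum (\<lambda>y. norm (f y)) (snd ` ?Sig) = infsum ((\<lambda>y. norm (f y)) \<circ> snd) ?Sig"
      by (rule infsum_reindex[OF inj])
    then show ?thesis by (simp add: o_def case_prod_unfold)
  qed
  have le: "infsum (\<lambda>y. norm (f y)) (snd ` ?Sig) \<le> infsum (\<lambda>y. norm (f y)) (UNIV - SN N)"
    by (rule infsum_mono_neutral) (use sub abs_sub[OF f] in auto)
  have sm: "(\<lambda>x. infsum (\<lambda>y. norm (f y)) (Rs x)) summable_on Bd N"
    using summable_on_Sigma_banach[OF s1] by simp
  have c1: "(\<lambda>x. if x \<in> Bd N then infsum (\<lambda>y. norm (f y)) (Rs x) else 0) summable_on UNIV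
      \<longleftrightarrow> (\<lambda>x. infsum (\<lambda>y. norm (f y)) (Rs x)) summable_on Bd N"
    by (rule summable_on_cong_neutral) auto
  show "(\<lambda>x. if x \<in> Bd N then infsum (\<lambda>y. norm (f y)) (Rs x) else 0) summable_on UNIV"
    using c1 sm by simp
  have "infsum (\<lambda>x. if x \<in> Bd N then infsum (\<lambda>y. norm (f y)) (Rs x) else 0) UNIV
      = infsum (\<lambda>x. infsum (\<lambda>y. norm (f y)) (Rs x)) (Bd N)"
    by (rule infsum_cong_neutral) auto
  then show "infsum (\<lambda>x. if x \<in> Bd N then infsum (\<lambda>y. norm (f y)) (Rs x) else 0) UNIV \<le> infsum (\<lambda>y. norm (f y)) (UNIV - SN N)"
    using e1 e2 le by simp
qed

lemma B1_sum: assumes f: "asum f UNIV"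
  shows "(\<lambda>x. if x \<in> SN N then 0 else norm (f x)) summable_on UNIV"
    "infsum (\<lambda>x. if x \<in> SN N then 0 else norm (f x)) UNIV = infsum (\<lambda>y. norm (f y)) (UNIV - SN N)"
proof -
  have c: "(\<lambda>x. if x \<in> SN N then 0 else norm (f x)) summable_on UNIV \<longleftrightarrow> (\<lambda>x. norm (f x)) summable_on (UNIV - SN N)"
    by (rule summable_on_cong_neutral) auto
  then show "(\<lambda>x. if x \<in> SN N then 0 else norm (f x)) summable_on UNIV" using abs_sub[OF f] by simp
  show "infsum (\<lambda>x. if x \<in> SN N then 0 else norm (f x)) UNIV = infsum (\<lambda>y. norm (f y)) (UNIV - SN N)"
    by (rule infsum_cong_neutral) auto
qed

lemma err_l1: assumes Z: "ZS f" and h: "hN f N \<in> Acal"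
  shows "l1norm (\<lambda>t. hN f N t - f t) \<le> 2 * infsum (\<lambda>y. norm (f y)) (UNIV - SN N)"
proof -
  have f: "asum f UNIV" using Z by (simp add: ZS_def Acal_def)
  have eA: "(\<lambda>t. hN f N t - f t) \<in> Acal" using Acal_diff[OF h] Z by (simp add: ZS_def)
  let ?B1 = "\<lambda>x. if x \<in> SN N then 0 else norm (f x)"
  let ?B2 = "\<lambda>x. if x \<in> Bd N then infsum (\<lambda>y. norm (f y)) (Rs x) else 0"
  have "l1norm (\<lambda>t. hN f N t - f t) \<le> infsum (\<lambda>x. ?B1 x + ?B2 x) UNIV"
    unfolding l1norm_def
    by (rule infsum_mono) (use eA B1_sum[OF f] B2_sum[OF f] err_bound[OF Z] in \<open>auto simp: Acal_def intro: summable_on_add\<close>)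
  also have "\<dots> = infsum ?B1 UNIV + infsum ?B2 UNIV"
    by (rule infsum_add) (use B1_sum[OF f] B2_sum[OF f] in auto)
  also have "\<dots> \<le> 2 * infsum (\<lambda>y. norm (f y)) (UNIV - SN N)"
    using B1_sum(2)[OF f] B2_sum(2)[OF f] by simp
  finally show ?thesis .
qed

lemma ZS_in_closed_ideal:
  assumes Z: "ZS f" and I: "two_sided_ideal I" and C: "l1_closed I" and f0: "f0 \<in> I"
  shows "f \<in> I"
proof -
  have f: "asum f UNIV" using Z by (simp add: ZS_def Acal_def)
  have hI: "hN f N \<in> I" for N
    unfolding hN_def by (rule ideal_sum[OF I finite_SN dgen_in[OF I f0]])
  have hA: "hN f N \<in> Acal" for N using id_Acal[OF I hI] .
  have t: "(\<lambda>N. 2 * infsum (\<lambda>y. norm (f y)) (UNIV - SN N)) \<longlonglongrightarrow> 0"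
    using tendsto_mult_right_zero[OF tail_tendsto[OF f], of 2] by simp
  have "(\<lambda>N. l1norm (\<lambda>t. hN f N t - f t)) \<longlonglongrightarrow> 0"
  proof (rule Lim_null_comparison[OF _ t])
    show "\<forall>\<^sub>F N in sequentially. norm (l1norm (\<lambda>t. hN f N t - f t)) \<le> 2 * infsum (\<lambda>y. norm (f y)) (UNIV - SN N)"
    proof (rule always_eventually, rule allI)
      fix N
      have "0 \<le> l1norm (\<lambda>t. hN f N t - f t)" unfolding l1norm_def by (rule infsum_nonneg) auto
      then show "norm (l1norm (\<lambda>t. hN f N t - f t)) \<le> 2 * infsum (\<lambda>y. norm (f y)) (UNIV - SN N)"
        using err_l1[OF Z hA] by simp
    qed
  qed
  then show ?thesis using C hI Z unfolding l1_closed_def ZS_def by blast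
qed

lemma asum_swap: "asum (\<lambda>(x,y). F x y) UNIV \<Longrightarrow> asum (\<lambda>(y,x). F x y) UNIV"
proof -
  assume a: "asum (\<lambda>(x,y). F x y) UNIV"
  have "asum ((\<lambda>(x,y). F x y) \<circ> prod.swap) UNIV"
    using summable_on_reindex[OF inj_swap, of "\<lambda>p. norm ((\<lambda>(x,y). F x y) p)" UNIV] a by (simp add: o_def)
  then show ?thesis by (simp add: o_def case_prod_unfold)
qed

lemma series_abs:
  assumes A: "\<And>k. a k \<in> Acal" and S: "(\<lambda>k. l1norm (a k)) summable_on UNIV"
  shows "asum (\<lambda>(k,t). a k t) UNIV"
proof -
  have 1: "\<forall>k\<in>UNIV. asum (\<lambda>t. (\<lambda>(k,t). a k t) (k, t)) UNIV" using A by (simp add: Acal_def)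
  have 2: "(\<lambda>k. norm (infsum (\<lambda>t. norm ((\<lambda>(k,t). a k t) (k, t))) UNIV)) summable_on UNIV"
    using S by (simp add: l1norm_def abs_of_nonneg infsum_nonneg)
  show ?thesis using Infinite_Sum.abs_summable_on_Sigma_iff[of "\<lambda>(k,t). a k t" UNIV "\<lambda>_. UNIV"] 1 2 by simp
qed

lemma series_Acal:
  assumes A: "\<And>k. a k \<in> Acal" and S: "(\<lambda>k. l1norm (a k)) summable_on UNIV"
  shows "(\<lambda>t. infsum (\<lambda>k. a k t) UNIV) \<in> Acal" "\<And>t. asum (\<lambda>k. a k t) UNIV"
proof -
  have sw: "asum (\<lambda>(t,k). a k t) UNIV" using asum_swap[OF series_abs[OF A S]] .
  have i: "\<forall>t\<in>UNIV. asum (\<lambda>k. (\<lambda>(t,k). a k t) (t, k)) UNIV"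
   and ii: "(\<lambda>t. norm (infsum (\<lambda>k. norm ((\<lambda>(t,k). a k t) (t, k))) UNIV)) summable_on UNIV"
    using Infinite_Sum.abs_summable_on_Sigma_iff[of "\<lambda>(t,k). a k t" UNIV "\<lambda>_. UNIV"] sw by auto
  have sl: "asum (\<lambda>k. a k t) UNIV" for t
  proof -
    have "asum (\<lambda>x. (\<lambda>(t,k). a k t) (t, x)) UNIV" using i by blast
    then show ?thesis by (simp only: prod.case)
  qed
  show "asum (\<lambda>k. a k t) UNIV" for t by (rule sl)
  have ii': "(\<lambda>t. infsum (\<lambda>k. norm (a k t)) UNIV) summable_on UNIV"
    using ii by (simp add: abs_of_nonneg infsum_nonneg)
  have b: "norm (infsum (\<lambda>k. a k t) UNIV) \<le> infsum (\<lambda>k. norm (a k t)) UNIV" for t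
    by (rule norm_infsum_bound) (rule sl)
  show "(\<lambda>t. infsum (\<lambda>k. a k t) UNIV) \<in> Acal"
    unfolding Acal_def mem_Collect_eq by (rule Infinite_Sum.abs_summable_on_comparison_test'[OF ii' b])
qed

lemma conv_series:
  assumes A: "\<And>k. a k \<in> Acal" and S: "(\<lambda>k. l1norm (a k)) summable_on UNIV" and r: "r \<in> Acal"
  shows "conv (\<lambda>t. infsum (\<lambda>k. a k t) UNIV) r t = infsum (\<lambda>k. conv (a k) r t) UNIV"
proof -
  let ?Ft = "{x. cm x = Some t}"
  have ta: "asum (tens (a k) r) UNIV" for k using tens_abs(1)[of "a k" r] A[of k] r by (simp add: Acal_def)
  have tn: "infsum (\<lambda>x. norm (tens (a k) r x)) UNIV = l1norm (a k) * l1norm r" for k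
    using tens_abs(2)[of "a k" r] A[of k] r by (simp add: Acal_def l1norm_def)
  have ab: "asum (\<lambda>(k,x). tens (a k) r x) UNIV"
  proof -
    have 1: "\<forall>k\<in>UNIV. asum (\<lambda>x. (\<lambda>(k,x). tens (a k) r x) (k, x)) UNIV" using ta by simp
    have 2: "(\<lambda>k. norm (infsum (\<lambda>x. norm ((\<lambda>(k,x). tens (a k) r x) (k, x))) UNIV)) summable_on UNIV"
    proof -
      have e: "(\<lambda>k. norm (infsum (\<lambda>x. norm ((\<lambda>(k,x). tens (a k) r x) (k, x))) UNIV)) = (\<lambda>k. l1norm (a k) * l1norm r)"
        using tn by (simp add: fun_eq_iff infsum_nonneg l1norm_def)
      show ?thesis unfolding e using summable_on_cmult_left[OF S, of "l1norm r"] .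
    qed
    show ?thesis using Infinite_Sum.abs_summable_on_Sigma_iff[of "\<lambda>(k,x). tens (a k) r x" UNIV "\<lambda>_. UNIV"] 1 2 by simp
  qed
  have ab2: "asum (\<lambda>(x,k). tens (a k) r x) UNIV" using asum_swap[OF ab] .
  have sm: "(\<lambda>(x,k). tens (a k) r x) summable_on (?Ft \<times> UNIV)"
    using abs_sum_sub[OF ab2] .
  have "conv (\<lambda>t. infsum (\<lambda>k. a k t) UNIV) r t = infsum (tens (\<lambda>t. infsum (\<lambda>k. a k t) UNIV) r) ?Ft"
    by (simp add: conv_push push_def)
  also have "\<dots> = infsum (\<lambda>x. infsum (\<lambda>k. tens (a k) r x) UNIV) ?Ft"
    by (simp add: tens_def[abs_def] infsum_cmult_left')
  also have "\<dots> = infsum (\<lambda>k. infsum (\<lambda>x. tens (a k) r x) ?Ft) UNIV"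
    by (rule infsum_swap_banach[OF sm])
  also have "\<dots> = infsum (\<lambda>k. conv (a k) r t) UNIV"
    by (simp add: conv_push push_def)
  finally show ?thesis .
qed

fun pw :: "(cu \<Rightarrow> complex) \<Rightarrow> nat \<Rightarrow> cu \<Rightarrow> complex" where
  "pw r 0 = delta_e"
| "pw r (Suc k) = conv (pw r k) r"

lemma pw_Acal: "r \<in> Acal \<Longrightarrow> pw r k \<in> Acal"
  by (induction k) (auto simp: delta_e_def delta_Acal conv_Acal)

lemma l1norm_e: "l1norm delta_e = 1"
proof -
  have "infsum (\<lambda>x. norm (delta_e x)) UNIV = infsum (\<lambda>x. norm (delta_e x)) {([],[])}"
    by (rule infsum_cong_neutral) (auto simp: delta_e_def delta_def)
  then show ?thesis by (simp add: l1norm_def delta_e_def delta_def)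
qed

lemma pw_norm: "r \<in> Acal \<Longrightarrow> l1norm (pw r k) \<le> l1norm r ^ k"
proof (induction k)
  case 0 then show ?case by (simp add: l1norm_e)
next
  case (Suc k)
  have "l1norm (pw r (Suc k)) \<le> l1norm (pw r k) * l1norm r"
    using conv_norm[OF pw_Acal[OF Suc.prems] Suc.prems] by simp
  also have "\<dots> \<le> l1norm r ^ k * l1norm r"
    by (rule mult_right_mono[OF Suc.IH[OF Suc.prems]]) (simp add: l1norm_def infsum_nonneg)
  finally show ?case by (simp add: mult.commute)
qed

lemma neumann:
  assumes r: "r \<in> Acal" and n: "l1norm r < 1"
  shows "\<exists>u\<in>Acal. conv u (\<lambda>t. delta_e t - r t) = delta_e"
proof -
  let ?a = "pw r"
  have A: "\<And>k. ?a k \<in> Acal" using pw_Acal[OF r] .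
  have nn: "0 \<le> l1norm r" by (simp add: l1norm_def infsum_nonneg)
  have geo: "(\<lambda>k. l1norm r ^ k) summable_on UNIV"
    using summable_on_UNIV_nonneg_real_iff[of "\<lambda>k. l1norm r ^ k"] summable_geometric[of "l1norm r"] nn n by simp
  have S: "(\<lambda>k. l1norm (?a k)) summable_on UNIV"
  proof -
    have "(\<lambda>k. norm (l1norm (?a k))) summable_on UNIV"
      by (rule Infinite_Sum.abs_summable_on_comparison_test'[OF geo]) (use pw_norm[OF r] in \<open>simp add: l1norm_def infsum_nonneg\<close>)
    then show ?thesis by (simp add: l1norm_def infsum_nonneg)
  qed
  define u where "u = (\<lambda>t. infsum (\<lambda>k. ?a k t) UNIV)"
  have uA: "u \<in> Acal" using series_Acal(1)[OF A S] by (simp add: u_def)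
  have sl: "(\<lambda>k. ?a k t) summable_on UNIV" for t using abs_sum_sub[OF series_Acal(2)[OF A S, of t]] by simp
  have cu: "conv u r t = infsum (\<lambda>k. ?a (Suc k) t) UNIV" for t
    unfolding u_def using conv_series[OF A S r, of t] by simp
  have split: "u t = delta_e t + infsum (\<lambda>k. ?a (Suc k) t) UNIV" for t
  proof -
    have "x = 0 \<or> x \<in> range Suc" for x :: nat by (cases x) auto
    then have U: "(UNIV :: nat set) = insert 0 (range Suc)" by auto
    have s2: "(\<lambda>k. ?a k t) summable_on range Suc" using sl summable_on_subset_banach by blast
    have "u t = ?a 0 t + infsum (\<lambda>k. ?a k t) (range Suc)"
      unfolding u_def by (subst U, rule infsum_insert[OF s2]) auto
    also have "infsum (\<lambda>k. ?a k t) (range Suc) = infsum (\<lambda>k. ?a (Suc k) t) UNIV"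
      by (subst infsum_reindex) (auto simp: o_def)
    finally show ?thesis by simp
  qed
  have "conv u (\<lambda>t. delta_e t - r t) = (\<lambda>t. conv u delta_e t - conv u r t)"
    by (rule conv_diff2) (use r uA in \<open>auto simp: delta_e_def delta_Acal\<close>)
  also have "\<dots> = delta_e" using split cu by (simp add: conv_e_right fun_eq_iff)
  finally show ?thesis using uA by blast
qed

definition PP :: "word \<Rightarrow> word \<Rightarrow> cu \<Rightarrow> cu option" where
  "PP a b x = Option.bind (cu_mult ([],a) x) (\<lambda>y. cu_mult y (b,[]))"

lemma cm_left: "cu_mult ([],a) (i,j) = (if \<exists>k'. i = a @ k' then Some (drop (length a) i, j) else if \<exists>j'. a = i @ j' then Some ([], j @ drop (length i) a) else None)"
  by (simp add: cu_mult_def)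
lemma cm_right: "cu_mult (x,y) (b,[]) = (if \<exists>k'. b = y @ k' then Some (x @ drop (length y) b, []) else if \<exists>j'. y = b @ j' then Some (x, drop (length b) y) else None)"
  by (simp add: cu_mult_def)

lemma PP_e_if: assumes "a = i @ s" "b = j @ s" shows "PP a b (i,j) = Some ([],[])"
proof (cases "s = []")
  case True
  then show ?thesis using assms by (simp add: PP_def cm_left cm_right)
next
  case False
  have "\<not> (\<exists>k'. i = a @ k')" using assms False by auto
  then have "cu_mult ([],a) (i,j) = Some ([], b)" using assms by (simp add: cm_left)
  then show ?thesis by (simp add: PP_def cm_right)
qed

lemma PP_e_only: assumes "PP a b (i,j) = Some ([],[])" shows "\<exists>s. a = i @ s \<and> b = j @ s"
proof (cases "\<exists>k'. i = a @ k'")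
  case True
  then obtain k' where k': "i = a @ k'" by blast
  have "cu_mult (k', j) (b,[]) = Some ([],[])" using assms k' by (simp add: PP_def cm_left)
  then have "k' = [] \<and> j = b"
    by (auto simp: cm_right split: if_splits)
  then show ?thesis using k' by auto
next
  case False
  then obtain j' where j': "a = i @ j'" using assms by (auto simp: PP_def cm_left split: if_splits)
  have "cu_mult ([], j @ j') (b,[]) = Some ([],[])" using assms j' False by (simp add: PP_def cm_left)
  then have "b = j @ j'" by (auto simp: cm_right split: if_splits)
  then show ?thesis using j' by auto
qed

lemma T_clash: assumes e: "X @ T @ Y = Z @ T" and T: "T = replicate M G1 @ [G2]"
  and Y: "0 < length Y" "length Y \<le> M" shows False
proof -
  have lT: "length T = Suc M" using T by simp
  have lZ: "length Z = length X + length Y" using arg_cong[OF e, of length] by simp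
  have "drop (length Z) (X @ T @ Y) = drop (length Y) T @ Y"
    using lZ lT Y by simp
  moreover have "drop (length Z) (Z @ T) = T" by simp
  ultimately have d: "drop (length Y) T @ Y = T" using e by simp
  have "(drop (length Y) T @ Y) ! (M - length Y) = drop (length Y) T ! (M - length Y)"
    using lT Y by (simp add: nth_append Suc_diff_le)
  also have "\<dots> = T ! M" using lT Y by simp
  also have "\<dots> = G2" using T by (simp add: nth_append)
  finally have "T ! (M - length Y) = G2" using d by simp
  moreover have "M - length Y < M" using Y by linarith
  then have "T ! (M - length Y) = G1" using T by (simp add: nth_append)
  ultimately show False by simp
qed

lemma PP_bad:
  assumes P: "PP a b (i,j) = Some t"
    and a: "a = (c @ nl \<nu> L) @ T" and b: "b = (d @ nl \<nu> L) @ T" and T: "T = replicate M G1 @ [G2]"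
    and i: "length i \<le> K" and j: "length j \<le> K" and KL: "K \<le> L" and KM: "K + length c + length d \<le> M"
  shows "t = ([],[])"
proof -
  define A' where "A' = drop (length i) (c @ nl \<nu> L)"
  define B' where "B' = d @ nl \<nu> L"
  have li: "length i \<le> length (c @ nl \<nu> L)" using i KL by simp
  have ai: "a = i @ (A' @ T)" if h: "\<exists>j'. a = i @ j'"
  proof -
    obtain j' where "a = i @ j'" using h by blast
    then have "j' = drop (length i) a" by simp
    also have "\<dots> = A' @ T" using li a by (simp add: A'_def)
    finally show ?thesis using \<open>a = i @ j'\<close> by simp
  qed
  have n1: "\<not> (\<exists>k'. i = a @ k')" using i KL a T by auto
  have "\<exists>j'. a = i @ j'"
  proof (rule ccontr)
    assume "\<not> (\<exists>j'. a = i @ j')"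
    then show False using P n1 by (simp add: PP_def cm_left)
  qed
  then have aa: "a = i @ (A' @ T)" using ai by blast
  have Q: "cu_mult ([],a) (i,j) = Some ([], j @ A' @ T)" using aa n1 by (simp add: cm_left)
  then have P2: "cu_mult ([], j @ A' @ T) (b,[]) = Some t" using P by (simp add: PP_def)
  have lb: "length b = length d + L + Suc M" using b T by simp
  have la: "length a = length c + L + Suc M" using a T by simp
  have lA: "length (A' @ T) = length a - length i" using aa by simp
  show ?thesis
  proof (cases "\<exists>k''. b = (j @ A' @ T) @ k''")
    case True
    then obtain k'' where k: "b = (j @ A' @ T) @ k''" by blast
    then have t: "t = (k'', [])" using P2 by (simp add: cm_right)
    show ?thesis
    proof (cases "k'' = []")
      case True then show ?thesis using t by simp
    next
      case False
      have "length k'' \<le> M" using k lb la lA i j KM by simp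
      moreover have "(j @ A') @ T @ k'' = B' @ T" using k b by (simp add: B'_def)
      ultimately show ?thesis using T_clash[OF _ T] False by blast
    qed
  next
    case nT: False
    then obtain z where z: "j @ A' @ T = b @ z" using P2 by (simp add: cm_right split: if_splits)
    then have t: "t = ([], z)" using P2 nT by (simp add: cm_right)
    show ?thesis
    proof (cases "z = []")
      case True then show ?thesis using t by simp
    next
      case False
      have "length z \<le> M" using arg_cong[OF z, of length] lb la lA i j KM by simp
      moreover have "B' @ T @ z = (j @ A') @ T" using z b by (simp add: B'_def)
      ultimately show ?thesis using T_clash[OF _ T] False by blast
    qed
  qed
qed

lemma diag: assumes w: "wsc (c,d)" and e1: "c @ w = i @ s" and e2: "d @ w = j @ s"
  shows "\<exists>t \<le> length w. i = c @ take t w \<and> j = d @ take t w"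
proof (cases "length s \<le> length w")
  case True
  have l1: "length c \<le> length i" using arg_cong[OF e1, of length] True by simp
  have l2: "length d \<le> length j" using arg_cong[OF e2, of length] True by simp
  have i: "i = c @ drop (length c) i" and wi: "w = drop (length c) i @ s"
    using e1 l1 by (auto simp: append_eq_append_conv_if) (metis append_take_drop_id)+
  have j: "j = d @ drop (length d) j" and wj: "w = drop (length d) j @ s"
    using e2 l2 by (auto simp: append_eq_append_conv_if) (metis append_take_drop_id)+
  have u1: "drop (length c) i = take (length w - length s) w" using wi by (metis append_eq_conv_conj length_append add_diff_cancel_right')
  have u2: "drop (length d) j = take (length w - length s) w" using wj by (metis append_eq_conv_conj length_append add_diff_cancel_right')
  show ?thesis using i j u1 u2 by (intro exI[of _ "length w - length s"]) auto
next
  case False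
  have l1: "length i < length c" using arg_cong[OF e1, of length] False by simp
  have l2: "length j < length d" using arg_cong[OF e2, of length] False by simp
  have c: "c = i @ drop (length i) c" and sc: "s = drop (length i) c @ w"
    using e1 l1 by (auto simp: append_eq_append_conv_if) (metis append_take_drop_id)+
  have d: "d = j @ drop (length j) d" and sd: "s = drop (length j) d @ w"
    using e2 l2 by (auto simp: append_eq_append_conv_if) (metis append_take_drop_id)+
  have eq: "drop (length i) c = drop (length j) d" using sc sd by simp
  have ne: "drop (length i) c \<noteq> []" using l1 by simp
  have "last c = last (drop (length i) c)" using c ne by (metis last_appendR)
  moreover have "last d = last (drop (length i) c)" using d ne eq by (metis last_appendR)
  moreover have "c \<noteq> []" "d \<noteq> []" using l1 l2 by auto
  ultimately show ?thesis using w by (simp add: wsc_def)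
qed

lemma take_nl: "t \<le> L \<Longrightarrow> take t (nl \<nu> L) = nl \<nu> t"
  by (simp add: nl_def take_map)

lemma conv_PP: assumes f: "f \<in> Acal"
  shows "conv (conv (delta ([],a)) f) (delta (b,[])) = push (PP a b) f"
proof -
  have F: "asum f UNIV" using f by (simp add: Acal_def)
  show ?thesis
    by (simp add: conv_delta_left conv_delta_right push_comp[OF F] PP_def[abs_def])
qed

lemma compress:
  assumes f: "f \<in> Acal" and w: "wsc (c,d)" and sig: "infsum f (Br (c,d) \<nu>) = \<sigma>" and s0: "\<sigma> \<noteq> 0"
  shows "\<exists>a b. l1norm (\<lambda>t. conv (conv (delta ([],a)) f) (delta (b,[])) t - \<sigma> * delta_e t) < norm \<sigma>"
proof -
  have F: "asum f UNIV" using f by (simp add: Acal_def)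
  define \<epsilon> where "\<epsilon> = norm \<sigma> / 4"
  have ep: "\<epsilon> > 0" using s0 by (simp add: \<epsilon>_def)
  obtain K where K: "norm (infsum (\<lambda>x. norm (f x)) (UNIV - SN K) - 0) < \<epsilon>"
    using LIMSEQ_D[OF tail_tendsto[OF F] ep] by blast
  have sums: "(\<lambda>l. f (branch (c,d) \<nu> l)) sums \<sigma>" using branch_sums[OF f, of "(c,d)" \<nu>] sig by simp
  obtain L0 where L0: "\<And>L. L \<ge> L0 \<Longrightarrow> norm ((\<Sum>l<L. f (branch (c,d) \<nu> l)) - \<sigma>) < \<epsilon>"
    using LIMSEQ_D[OF sums[unfolded sums_def] ep] by blast
  define L where "L = max K L0"
  define M where "M = K + length c + length d"
  define T where "T = replicate M G1 @ [G2]"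
  define a where "a = (c @ nl \<nu> L) @ T"
  define b where "b = (d @ nl \<nu> L) @ T"
  define G where "G = push (PP a b) f"
  have KL: "K \<le> L" by (simp add: L_def)
  have G: "conv (conv (delta ([],a)) f) (delta (b,[])) = G" by (simp add: G_def conv_PP[OF f])
  define Big where "Big = {x :: cu. K < length (fst x) \<or> K < length (snd x)}"
  have BigS: "Big \<subseteq> UNIV - SN K" by (auto simp: Big_def SN_def)
  define SB where "SB = infsum (\<lambda>x. norm (f x)) Big"
  have SB: "SB < \<epsilon>"
  proof -
    have "SB \<le> infsum (\<lambda>x. norm (f x)) (UNIV - SN K)"
      unfolding SB_def by (rule infsum_mono_neutral) (use BigS abs_sub[OF F] in auto)
    then show ?thesis using K by simp
  qed
  define D where "D = {x. PP a b x = Some ([],[])}"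
  define D1 where "D1 = branch (c,d) \<nu> ` {..L}"
  have D1D: "D1 \<subseteq> D"
  proof
    fix x assume "x \<in> D1"
    then obtain t where t: "t \<le> L" "x = branch (c,d) \<nu> t" by (auto simp: D1_def)
    have nlsplit: "nl \<nu> L = nl \<nu> t @ drop t (nl \<nu> L)"
      using take_nl[OF t(1), of \<nu>] by (metis append_take_drop_id)
    have "PP a b (c @ nl \<nu> t, d @ nl \<nu> t) = Some ([],[])"
      by (rule PP_e_if[where s = "drop t (nl \<nu> L) @ T"]) (simp_all add: a_def b_def, (subst nlsplit, simp)+)
    then show "x \<in> D" using t by (simp add: D_def branch_def)
  qed
  have DBig: "D - D1 \<subseteq> Big"
  proof
    fix x assume x: "x \<in> D - D1"
    show "x \<in> Big"
    proof (rule ccontr)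
      assume nb: "x \<notin> Big"
      obtain i j where ij: "x = (i,j)" by (cases x)
      have li: "length i \<le> K" using nb ij by (auto simp: Big_def)
      have "PP a b (i,j) = Some ([],[])" using x ij by (simp add: D_def)
      then obtain s where s: "a = i @ s" "b = j @ s" using PP_e_only by blast
      obtain t where t: "t \<le> length (nl \<nu> L @ T)" "i = c @ take t (nl \<nu> L @ T)" "j = d @ take t (nl \<nu> L @ T)"
        using diag[OF w, of "nl \<nu> L @ T" i s j] s by (auto simp: a_def b_def)
      have tK: "t \<le> K" using li t(1) t(2) by (auto simp: min_def split: if_splits)
      have tl: "take t (nl \<nu> L @ T) = nl \<nu> t" using tK KL by (simp add: take_nl)
      have "x = branch (c,d) \<nu> t" using ij t tl by (simp add: branch_def)
      then have "x \<in> D1" using tK KL by (auto simp: D1_def)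
      then show False using x by simp
    qed
  qed
  have other: "{x. PP a b x \<in> Some ` (UNIV - {([],[])})} \<subseteq> Big"
  proof
    fix x assume x: "x \<in> {x. PP a b x \<in> Some ` (UNIV - {([],[])})}"
    show "x \<in> Big"
    proof (rule ccontr)
      assume nb: "x \<notin> Big"
      obtain i j where ij: "x = (i,j)" by (cases x)
      obtain t where t: "PP a b (i,j) = Some t" "t \<noteq> ([],[])" using x ij by auto
      have "t = ([],[])"
        by (rule PP_bad[OF t(1) a_def b_def T_def]) (use nb ij KL in \<open>auto simp: Big_def M_def\<close>)
      then show False using t(2) by simp
    qed
  qed
  have fD: "f summable_on D1" "f summable_on (D - D1)" using abs_sum_sub[OF F] by auto
  have Ge: "G ([],[]) = infsum f D1 + infsum f (D - D1)"
  proof -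
    have "G ([],[]) = infsum f D" by (simp add: G_def push_def D_def)
    also have "D = D1 \<union> (D - D1)" using D1D by auto
    finally show ?thesis using infsum_Un_disjoint[OF fD] by simp
  qed
  have D1s: "infsum f D1 = (\<Sum>l<Suc L. f (branch (c,d) \<nu> l))"
  proof -
    have "infsum f D1 = infsum (f \<circ> branch (c,d) \<nu>) {..L}"
      unfolding D1_def by (rule infsum_reindex) (meson branch_inj inj_on_subset subset_UNIV)
    also have "\<dots> = (\<Sum>l\<le>L. f (branch (c,d) \<nu> l))" by simp
    finally show ?thesis by (simp add: lessThan_Suc_atMost)
  qed
  have D2: "norm (infsum f (D - D1)) \<le> SB"
  proof -
    have "norm (infsum f (D - D1)) \<le> infsum (\<lambda>x. norm (f x)) (D - D1)"
      by (rule norm_infsum_bound) (rule abs_sub[OF F])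
    also have "\<dots> \<le> SB" unfolding SB_def
      by (rule infsum_mono_neutral) (use DBig abs_sub[OF F] in auto)
    finally show ?thesis .
  qed
  have Gerr: "norm (G ([],[]) - \<sigma>) < \<epsilon> + SB"
  proof -
    have e: "G ([],[]) - \<sigma> = ((\<Sum>l<Suc L. f (branch (c,d) \<nu> l)) - \<sigma>) + infsum f (D - D1)"
      using Ge D1s by simp
    have "norm (G ([],[]) - \<sigma>) \<le> norm ((\<Sum>l<Suc L. f (branch (c,d) \<nu> l)) - \<sigma>) + norm (infsum f (D - D1))"
      unfolding e by (rule norm_triangle_ineq)
    moreover have "norm ((\<Sum>l<Suc L. f (branch (c,d) \<nu> l)) - \<sigma>) < \<epsilon>" by (rule L0) (simp add: L_def)
    ultimately show ?thesis using D2 by simp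
  qed
  have Goff: "infsum (\<lambda>t. norm (G t)) (UNIV - {([],[])}) \<le> SB"
  proof -
    have "infsum (\<lambda>t. norm (G t)) (UNIV - {([],[])}) \<le> infsum (\<lambda>x. norm (f x)) {x. PP a b x \<in> Some ` (UNIV - {([],[])})}"
      unfolding G_def by (rule fiber(3)[OF F])
    also have "\<dots> \<le> SB" unfolding SB_def
      by (rule infsum_mono_neutral) (use other abs_sub[OF F] in auto)
    finally show ?thesis .
  qed
  have GA: "(\<lambda>t. G t - \<sigma> * delta_e t) \<in> Acal"
    using Acal_diff[OF push_Acal[OF F] Acal_scale[OF delta_Acal]] by (simp add: G_def delta_e_def)
  have "l1norm (\<lambda>t. G t - \<sigma> * delta_e t) = norm (G ([],[]) - \<sigma>) + infsum (\<lambda>t. norm (G t - \<sigma> * delta_e t)) (UNIV - {([],[])})"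
  proof -
    have s: "(\<lambda>t. norm (G t - \<sigma> * delta_e t)) summable_on (UNIV - {([],[])})" using GA by (simp add: Acal_def abs_sub)
    have U: "(UNIV :: cu set) = insert ([],[]) (UNIV - {([],[])})" by auto
    show ?thesis unfolding l1norm_def
      by (subst U, subst infsum_insert[OF s]) (auto simp: delta_e_def delta_def)
  qed
  also have "infsum (\<lambda>t. norm (G t - \<sigma> * delta_e t)) (UNIV - {([],[])}) = infsum (\<lambda>t. norm (G t)) (UNIV - {([],[])})"
    by (rule infsum_cong) (auto simp: delta_e_def delta_def)
  finally have "l1norm (\<lambda>t. G t - \<sigma> * delta_e t) < \<epsilon> + SB + SB" using Gerr Goff by simp
  also have "\<dots> < norm \<sigma>"
  proof -
    have "0 \<le> SB" unfolding SB_def by (rule infsum_nonneg) auto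
    then show ?thesis using SB unfolding \<epsilon>_def by linarith
  qed
  finally show ?thesis using G by metis
qed

lemma l1norm_scale: "l1norm (\<lambda>t. c * F t) = norm c * l1norm F"
  by (simp add: l1norm_def norm_mult infsum_cmult_right')

lemma invertible:
  assumes f: "f \<in> Acal" and nz: "\<not> ZS f"
  shows "\<exists>g\<in>Acal. \<exists>h\<in>Acal. conv (conv g f) h = delta_e"
proof -
  obtain v n where w: "wsc v" and s0: "infsum f (Br v n) \<noteq> 0" using nz f by (auto simp: ZS_def)
  obtain c d where v: "v = (c,d)" by (cases v)
  define \<sigma> where "\<sigma> = infsum f (Br v n)"
  obtain a b where ab: "l1norm (\<lambda>t. conv (conv (delta ([],a)) f) (delta (b,[])) t - \<sigma> * delta_e t) < norm \<sigma>"
    using compress[OF f w[unfolded v], of n \<sigma>] s0 v by (auto simp: \<sigma>_def)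
  define G where "G = conv (conv (delta ([],a)) f) (delta (b,[]))"
  have GA: "G \<in> Acal" by (simp add: G_def conv_Acal delta_Acal f)
  have sn: "\<sigma> \<noteq> 0" using s0 by (simp add: \<sigma>_def)
  define r where "r = (\<lambda>t. delta_e t - (1/\<sigma>) * G t)"
  have rA: "r \<in> Acal" unfolding r_def by (intro Acal_diff Acal_scale GA) (simp add: delta_e_def delta_Acal)
  have "r = (\<lambda>t. (- 1/\<sigma>) * (G t - \<sigma> * delta_e t))" using sn by (auto simp: r_def fun_eq_iff field_simps)
  then have "l1norm r = norm (- 1/\<sigma>) * l1norm (\<lambda>t. G t - \<sigma> * delta_e t)" by (simp only: l1norm_scale)
  moreover have "norm (- 1/\<sigma>) = norm (1/\<sigma>)" by (simp add: norm_divide)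
  ultimately have "l1norm r = norm (1/\<sigma>) * l1norm (\<lambda>t. G t - \<sigma> * delta_e t)" by simp
  also have "\<dots> < norm (1/\<sigma>) * norm \<sigma>"
    using ab sn by (intro mult_strict_left_mono) (auto simp: G_def)
  also have "\<dots> = 1" using sn by (simp add: norm_divide)
  finally have rn: "l1norm r < 1" .
  obtain u where uA: "u \<in> Acal" and u: "conv u (\<lambda>t. delta_e t - r t) = delta_e"
    using neumann[OF rA rn] by blast
  have "(\<lambda>t. delta_e t - r t) = (\<lambda>t. (1/\<sigma>) * G t)" by (simp add: r_def)
  then have "conv u (\<lambda>t. (1/\<sigma>) * G t) = delta_e" using u by (simp only:)
  then have u2: "(\<lambda>t. (1/\<sigma>) * conv u G t) = delta_e" by (simp only: conv_scale2)
  define u' where "u' = (\<lambda>t. (1/\<sigma>) * u t)"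
  define g where "g = conv u' (delta ([],a))"
  have u'A: "u' \<in> Acal" unfolding u'_def using uA by (rule Acal_scale)
  have gA: "g \<in> Acal" unfolding g_def by (rule conv_Acal[OF u'A delta_Acal])
  have "conv (conv g f) (delta (b,[])) = conv (conv u' (conv (delta ([],a)) f)) (delta (b,[]))"
    unfolding g_def by (subst conv_assoc[OF u'A delta_Acal f]) (rule refl)
  also have "\<dots> = conv u' G"
    unfolding G_def by (rule conv_assoc[OF u'A conv_Acal[OF delta_Acal f] delta_Acal])
  also have "\<dots> = delta_e" using u2 unfolding u'_def by (simp only: conv_scale1)
  finally show ?thesis using gA delta_Acal by blast
qed

lemma Jcal_eq: "Jcal = Zset"
proof
  show "Jcal \<subseteq> Zset" unfolding Jcal_def using Zset_ideal Zset_closed ZS_f0 by (auto simp: Zset_def)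
  show "Zset \<subseteq> Jcal" unfolding Jcal_def Zset_def using ZS_in_closed_ideal by blast
qed

lemma Zset_Acal: "Zset \<subseteq> Acal" by (auto simp: Zset_def ZS_def)

lemma not_inv_Z: assumes fZ: "f \<in> Zset" shows "\<not> (\<exists>g\<in>Acal. \<exists>h\<in>Acal. conv (conv g f) h = delta_e)"
proof
  assume "\<exists>g\<in>Acal. \<exists>h\<in>Acal. conv (conv g f) h = delta_e"
  then obtain g h where g: "g \<in> Acal" and h: "h \<in> Acal" and e: "conv (conv g f) h = delta_e" by blast
  have "conv g f \<in> Zset" using id_convl[OF Zset_ideal g fZ] .
  then have "conv (conv g f) h \<in> Zset" using id_convr[OF Zset_ideal h] by blast
  then show False using e not_ZS_e by (simp add: Zset_def)
qed

theorem theorem3p15: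
  shows "(\<forall>f\<in>Acal.
            (f \<in> Jcal \<longleftrightarrow> (\<forall>v. without_symmetric_core v \<longrightarrow> zero_sums_at f v))
          \<and> (f \<in> Jcal \<longleftrightarrow> \<not> (\<exists>g\<in>Acal. \<exists>h\<in>Acal. conv (conv g f) h = delta_e)))
       \<and> Jcal = {f \<in> Acal. \<not> (\<exists>g\<in>Acal. \<exists>h\<in>Acal. conv (conv g f) h = delta_e)}
       \<and> two_sided_ideal Jcal \<and> Jcal \<noteq> Acal
       \<and> (\<forall>I. two_sided_ideal I \<and> I \<noteq> Acal \<longrightarrow> I \<subseteq> Jcal)"
proof -
  have eq1: "f \<in> Jcal \<longleftrightarrow> (\<forall>v. without_symmetric_core v \<longrightarrow> zero_sums_at f v)" if f: "f \<in> Acal" for f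
    using ZS_iff[OF f] by (simp add: Jcal_eq Zset_def)
  have eq2: "f \<in> Jcal \<longleftrightarrow> \<not> (\<exists>g\<in>Acal. \<exists>h\<in>Acal. conv (conv g f) h = delta_e)" if f: "f \<in> Acal" for f
  proof
    assume "f \<in> Jcal" then show "\<not> (\<exists>g\<in>Acal. \<exists>h\<in>Acal. conv (conv g f) h = delta_e)"
      using not_inv_Z by (simp add: Jcal_eq)
  next
    assume "\<not> (\<exists>g\<in>Acal. \<exists>h\<in>Acal. conv (conv g f) h = delta_e)"
    then have "ZS f" using invertible[OF f] by blast
    then show "f \<in> Jcal" by (simp add: Jcal_eq Zset_def)
  qed
  have J3: "Jcal = {f \<in> Acal. \<not> (\<exists>g\<in>Acal. \<exists>h\<in>Acal. conv (conv g f) h = delta_e)}"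
    using eq2 Zset_Acal Jcal_eq by blast
  have J4: "two_sided_ideal Jcal" by (simp add: Jcal_eq Zset_ideal)
  have J5: "Jcal \<noteq> Acal"
  proof
    assume "Jcal = Acal"
    then have "delta_e \<in> Zset" using delta_Acal by (simp add: Jcal_eq delta_e_def)
    then show False using not_ZS_e by (simp add: Zset_def)
  qed
  have J6: "I \<subseteq> Jcal" if I: "two_sided_ideal I" and ne: "I \<noteq> Acal" for I
  proof
    fix f assume fI: "f \<in> I"
    have fA: "f \<in> Acal" using id_Acal[OF I fI] .
    show "f \<in> Jcal"
    proof (rule ccontr)
      assume "f \<notin> Jcal"
      then obtain g h where g: "g \<in> Acal" and h: "h \<in> Acal" and e: "conv (conv g f) h = delta_e"
        using eq2[OF fA] by blast
      have "conv (conv g f) h \<in> I" using id_convr[OF I h id_convl[OF I g fI]] .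
      then have eI: "delta_e \<in> I" using e by simp
      have "Acal \<subseteq> I"
      proof
        fix x assume "x \<in> Acal"
        then have "conv x delta_e \<in> I" using id_convl[OF I _ eI] by blast
        then show "x \<in> I" by (simp add: conv_e_right)
      qed
      then have "I = Acal" using I by (auto simp: two_sided_ideal_def)
      then show False using ne by simp
    qed
  qed
  show ?thesis using eq1 eq2 J3 J4 J5 J6 by blast
qed

end
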